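(* Let $\mathsf{Syn}(\delta)$ be the free PROP on a single generator $\delta:1\to 2$ (graph model described in the context), let $\Pi:\mathsf{Syn}(\delta)\to\mathbf{FinCorel}$ be the ancestry functor, let $\mathsf{AncQ}:=\mathsf{Syn}(\delta)/\equiv_\Pi$ with quotient map $q$, and let $\bar\Pi:\mathsf{AncQ}\to\mathbf{FinCorel}$ be the induced functor with $\Pi=\bar\Pi\circ q$. Then $\bar\Pi$ is fully faithful with image the sub-PROP $\mathbf{FinCorel}^\circ$. Moreover, there is a canonical isomorphism of PROPs $\Phi:\mathbf{Cocom}\to\mathsf{AncQ}$ which is the identity on objects and sends the generator $\delta$ of $\mathbf{Cocom}$ to the class $[\delta]\in\mathsf{AncQ}(1,2)$. In particular $\mathsf{AncQ}\simeq\mathbf{Cocom}\simeq\mathbf{FinCorel}^\circ$.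
   Context: A PROP is a strict symmetric monoidal category whose monoid of objects is $(\mathbb{N},+,0)$; a morphism of PROPs is an identity-on-objects strict symmetric monoidal functor. Write $\underline{m}=\{1,\dots,m\}$. $\mathsf{Syn}(\delta)$: objects are natural numbers; a morphism $f:m\to n$ is an isomorphism class of finite directed acyclic graphs $G(f)$ with $m$ linearly ordered input half-edges, $n$ linearly ordered output half-edges, and a finite set of internal vertices, each having exactly one incoming half-edge and a linearly ordered (left/right) pair of outgoing half-edges; isomorphisms are bijections of internal vertices inducing graph isomorphisms preserving the orders on inputs/outputs and the incidence at each vertex. Composition glues output half-edges to input half-edges in order; tensor ($+$) is disjoint union with concatenated boundary orders; symmetries are wire crossings (not vertices). $\delta:1\to 2$ is the graph with one internal vertex. This is the free PROP on one morphism $1\to 2$. $\mathbf{FinCorel}$: PROP with objects $\mathbb{N}$, morphisms $m\to n$ the equivalence relations on $\underline{m}\sqcup\underline{n}$; the composite of $R:m\to n$ and $S:n\to p$ is the restriction to $\underline{m}\sqcup\underline{p}$ of the equivalence relation generated (transitive closure) by $R\cup S$ on $\underline{m}\sqcup\underline{n}\sqcup\underline{p}$; tensor is disjoint union with reindexing; symmetries are transposition corelations. Ancestry functor: for $f:m\to n$, let $|G(f)|$ be the underlying undirected graph of $G(f)$ with input half-edges attached as pendant vertices labelled by $\underline{m}$ and output half-edges as pendant vertices labelled by $\underline{n}$; $\Pi(f)$ is the equivalence relation on $\underline{m}\sqcup\underline{n}$ with $x\sim y$ iff the pendants $x,y$ lie in the same connected component of $|G(f)|$. $\Pi$ is an identity-on-objects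 strict symmetric monoidal functor. $f\equiv_\Pi g$ iff $\Pi(f)=\Pi(g)$; this is a PROP congruence and $\mathsf{AncQ}$ is the quotient PROP. $\mathbf{FinCorel}^\circ\subseteq\mathbf{FinCorel}$: the corelations $R:m\to n$ such that (a) every equivalence class of $R$ contains exactly one element of $\underline{m}$ and (b) every equivalence class contains at least one element of $\underline{n}$. $\mathbf{Cocom}$: the PROP freely generated by a morphism $\delta:1\to 2$ subject to $(\delta+\mathrm{id}_1)\circ\delta=(\mathrm{id}_1+\delta)\circ\delta$ and $\sigma_{1,1}\circ\delta=\delta$ ($\sigma_{1,1}:2\to 2$ the swap), with no counit, unit or multiplication. *)

theory Defs
  imports Main
begin

text \<open>Sources: input half-edge i, or out-port b of internal
vertex k (b = False: left, b = True: right). Targets: in-port of internal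
vertex k, or output half-edge j. A morphism m -> n is represented by a pair
(v, w): v internal vertices numbered 0..<v and a wiring w sending each target
to the source it is glued to. Morphisms of Syn(delta) are isomorphism classes
of such representatives (see syn_iso).\<close>

datatype src = SIn nat | SV nat bool
datatype tgt = TV nat | TOut nat

type_synonym sgraph = "nat \<times> (tgt \<Rightarrow> src)"

definition sources :: "nat \<Rightarrow> nat \<Rightarrow> src set" where
  "sources m v = {SIn i | i. i < m} \<union> {SV k b | k b. k < v}"

definition targets :: "nat \<Rightarrow> nat \<Rightarrow> tgt set" where
  "targets n v = {TV k | k. k < v} \<union> {TOut j | j. j < n}"

definition feeds :: "sgraph \<Rightarrow> (nat \<times> nat) set" where
  "feeds G = {(k, k'). k' < fst G \<and> (\<exists>b. snd G (TV k') = SV k b)}"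

definition wf_syn :: "nat \<Rightarrow> nat \<Rightarrow> sgraph \<Rightarrow> bool" where
  "wf_syn m n G \<longleftrightarrow>
     bij_betw (snd G) (targets n (fst G)) (sources m (fst G)) \<and> acyclic (feeds G)"

fun ren_src :: "(nat \<Rightarrow> nat) \<Rightarrow> src \<Rightarrow> src" where
  "ren_src p (SIn i) = SIn i"
| "ren_src p (SV k b) = SV (p k) b"

fun ren_tgt :: "(nat \<Rightarrow> nat) \<Rightarrow> tgt \<Rightarrow> tgt" where
  "ren_tgt p (TV k) = TV (p k)"
| "ren_tgt p (TOut j) = TOut j"

definition syn_iso :: "nat \<Rightarrow> sgraph \<Rightarrow> sgraph \<Rightarrow> bool" where
  "syn_iso n G H \<longleftrightarrow> fst G = fst H \<and>
     (\<exists>p. bij_betw p {..<fst G} {..<fst H} \<and>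
          (\<forall>t\<in>targets n (fst G). ren_src p (snd G t) = snd H (ren_tgt p t)))"

text \<open>Composition: syn_comp H G is "H after G" (G : m -> n, H : n -> p);
G's vertices come first, H's vertices are shifted by the number of G's.\<close>
definition syn_comp :: "sgraph \<Rightarrow> sgraph \<Rightarrow> sgraph" where
  "syn_comp H G =
    (let v = fst G;
         res = (\<lambda>s. case s of SIn j \<Rightarrow> snd G (TOut j) | SV k b \<Rightarrow> SV (v + k) b)
     in (v + fst H,
         \<lambda>t. case t of
               TV k \<Rightarrow> (if k < v then snd G (TV k) else res (snd H (TV (k - v))))
             | TOut j \<Rightarrow> res (snd H (TOut j))))"

text \<open>Tensor: syn_tensor m n G H = G + H where G : m -> n.\<close>
definition syn_tensor :: "nat \<Rightarrow> nat \<Rightarrow> sgraph \<Rightarrow> sgraph \<Rightarrow> sgraph" where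
  "syn_tensor m n G H =
    (let v = fst G;
         sh = (\<lambda>s. case s of SIn i \<Rightarrow> SIn (m + i) | SV k b \<Rightarrow> SV (v + k) b)
     in (v + fst H,
         \<lambda>t. case t of
               TV k \<Rightarrow> (if k < v then snd G (TV k) else sh (snd H (TV (k - v))))
             | TOut j \<Rightarrow> (if j < n then snd G (TOut j) else sh (snd H (TOut (j - n))))))"

definition syn_id :: "nat \<Rightarrow> sgraph" where
  "syn_id n = (0, \<lambda>t. case t of TOut j \<Rightarrow> SIn j | TV k \<Rightarrow> SIn 0)"

definition syn_swap :: sgraph where
  "syn_swap = (0, \<lambda>t. case t of TOut j \<Rightarrow> (if j = 0 then SIn 1 else SIn 0) | TV k \<Rightarrow> SIn 0)"

definition syn_delta :: sgraph where
  "syn_delta = (1, \<lambda>t. case t of TV k \<Rightarrow> SIn 0 | TOut j \<Rightarrow> SV 0 (j \<noteq> 0))"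

text \<open>Boundary of m -> n: Inl i (input i) and Inr j (output j).\<close>
definition bnd :: "nat \<Rightarrow> nat \<Rightarrow> (nat + nat) set" where
  "bnd m n = Inl ` {..<m} \<union> Inr ` {..<n}"

definition fincorel :: "nat \<Rightarrow> nat \<Rightarrow> (nat + nat) rel set" where
  "fincorel m n = {R. equiv (bnd m n) R}"

definition fincorel_circ :: "nat \<Rightarrow> nat \<Rightarrow> (nat + nat) rel set" where
  "fincorel_circ m n = {R \<in> fincorel m n.
      (\<forall>x\<in>bnd m n. \<exists>!i. i < m \<and> (x, Inl i) \<in> R) \<and>
      (\<forall>x\<in>bnd m n. \<exists>j<n. (x, Inr j) \<in> R)}"

datatype node = NIn nat | NVx nat | NOut nat

fun src_node :: "src \<Rightarrow> node" where
  "src_node (SIn i) = NIn i"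
| "src_node (SV k b) = NVx k"

fun tgt_node :: "tgt \<Rightarrow> node" where
  "tgt_node (TV k) = NVx k"
| "tgt_node (TOut j) = NOut j"

fun bnd_node :: "nat + nat \<Rightarrow> node" where
  "bnd_node (Inl i) = NIn i"
| "bnd_node (Inr j) = NOut j"

text \<open>Edges of the underlying undirected graph |G| (inputs and outputs as pendant vertices).\<close>
definition und_edges :: "nat \<Rightarrow> sgraph \<Rightarrow> (node \<times> node) set" where
  "und_edges n G = {(tgt_node t, src_node (snd G t)) | t. t \<in> targets n (fst G)}"

definition ancestry :: "nat \<Rightarrow> nat \<Rightarrow> sgraph \<Rightarrow> (nat + nat) rel" where
  "ancestry m n G = {(x, y). x \<in> bnd m n \<and> y \<in> bnd m n \<and>
      (bnd_node x, bnd_node y) \<in> (und_edges n G \<union> (und_edges n G)\<inverse>)\<^sup>*}"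

text \<open>The smallest PROP congruence on Syn(delta) (on representatives, so it
contains isomorphism) containing coassociativity and cocommutativity.\<close>
inductive cocom_cong :: "nat \<Rightarrow> nat \<Rightarrow> sgraph \<Rightarrow> sgraph \<Rightarrow> bool" where
  iso: "wf_syn m n G \<Longrightarrow> wf_syn m n H \<Longrightarrow> syn_iso n G H \<Longrightarrow> cocom_cong m n G H"
| coassoc: "cocom_cong 1 3
     (syn_comp (syn_tensor 1 2 syn_delta (syn_id 1)) syn_delta)
     (syn_comp (syn_tensor 1 1 (syn_id 1) syn_delta) syn_delta)"
| cocomm: "cocom_cong 1 2 (syn_comp syn_swap syn_delta) syn_delta"
| sym: "cocom_cong m n G H \<Longrightarrow> cocom_cong m n H G"
| trans: "cocom_cong m n G H \<Longrightarrow> cocom_cong m n H K \<Longrightarrow> cocom_cong m n G K"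
| comp_post: "cocom_cong m n G H \<Longrightarrow> wf_syn n p K \<Longrightarrow>
     cocom_cong m p (syn_comp K G) (syn_comp K H)"
| comp_pre: "cocom_cong n p G H \<Longrightarrow> wf_syn m n K \<Longrightarrow>
     cocom_cong m p (syn_comp G K) (syn_comp H K)"
| tens_l: "cocom_cong m n G H \<Longrightarrow> wf_syn m' n' K \<Longrightarrow>
     cocom_cong (m + m') (n + n') (syn_tensor m n G K) (syn_tensor m n H K)"
| tens_r: "cocom_cong m' n' G H \<Longrightarrow> wf_syn m n K \<Longrightarrow>
     cocom_cong (m + m') (n + n') (syn_tensor m n K G) (syn_tensor m n K H)"

end

theory Submission
  imports Defs
begin

lemma in_sources[simp]:
  "SIn i \<in> sources m v \<longleftrightarrow> i < m" "SV k b \<in> sources m v \<longleftrightarrow> k < v"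
  by (auto simp: sources_def)

lemma in_targets[simp]:
  "TV k \<in> targets n v \<longleftrightarrow> k < v" "TOut j \<in> targets n v \<longleftrightarrow> j < n"
  by (auto simp: targets_def)

lemma targets_eq: "targets n v = TV ` {..<v} \<union> TOut ` {..<n}"
  by (auto simp: targets_def)

lemma sources_eq: "sources m v = SIn ` {..<m} \<union> (\<lambda>(k,b). SV k b) ` ({..<v} \<times> UNIV)"
  by (auto simp: sources_def)

lemma card_targets: "card (targets n v) = v + n"
proof -
  have "card (TV ` {..<v} \<union> TOut ` {..<n}) = card (TV ` {..<v}) + card (TOut ` {..<n})"
    by (rule card_Un_disjoint) auto
  also have "\<dots> = v + n" by (simp add: card_image inj_on_def)
  finally show ?thesis by (simp add: targets_eq)
qed

lemma card_sources: "card (sources m v) = m + 2 * v"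
proof -
  have "card (SIn ` {..<m} \<union> (\<lambda>(k,b). SV k b) ` ({..<v} \<times> (UNIV::bool set))) =
     card (SIn ` {..<m}) + card ((\<lambda>(k,b). SV k b) ` ({..<v} \<times> (UNIV::bool set)))"
    by (rule card_Un_disjoint) auto
  also have "card ((\<lambda>(k,b). SV k b) ` ({..<v} \<times> (UNIV::bool set))) = card ({..<v} \<times> (UNIV::bool set))"
    by (rule card_image) (auto simp: inj_on_def)
  also have "\<dots> = 2 * v" by (simp add: card_cartesian_product)
  finally show ?thesis by (simp add: sources_eq card_image inj_on_def)
qed

lemma finite_targets[simp]: "finite (targets n v)" by (simp add: targets_eq)
lemma finite_sources[simp]: "finite (sources m v)" by (simp add: sources_eq)

lemma bij_by_inj:
  assumes "finite B" "inj_on f A" "f ` A \<subseteq> B" "card A = card B"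
  shows "bij_betw f A B"
proof -
  have "card (f ` A) = card B" using assms by (simp add: card_image)
  hence "f ` A = B" using assms by (meson card_subset_eq)
  thus ?thesis using assms by (simp add: bij_betw_def)
qed

lemma wf_into: "wf_syn m n G \<Longrightarrow> t \<in> targets n (fst G) \<Longrightarrow> snd G t \<in> sources m (fst G)"
  unfolding wf_syn_def bij_betw_def by auto

lemma wf_inj: "wf_syn m n G \<Longrightarrow> t \<in> targets n (fst G) \<Longrightarrow> t' \<in> targets n (fst G) \<Longrightarrow> snd G t = snd G t' \<Longrightarrow> t = t'"
  unfolding wf_syn_def bij_betw_def inj_on_def by auto

lemma wf_surj: "wf_syn m n G \<Longrightarrow> s \<in> sources m (fst G) \<Longrightarrow> \<exists>t\<in>targets n (fst G). snd G t = s"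
  unfolding wf_syn_def bij_betw_def by (metis imageE)

lemma wf_card: "wf_syn m n G \<Longrightarrow> n = m + fst G"
proof -
  assume "wf_syn m n G"
  hence "card (targets n (fst G)) = card (sources m (fst G))"
    unfolding wf_syn_def using bij_betw_same_card by blast
  thus ?thesis by (simp add: card_targets card_sources)
qed

lemma feeds_sub: "wf_syn m n G \<Longrightarrow> feeds G \<subseteq> {..<fst G} \<times> {..<fst G}"
proof
  fix x assume w: "wf_syn m n G" and x: "x \<in> feeds G"
  then obtain k k' b where "x = (k,k')" "k' < fst G" "snd G (TV k') = SV k b" by (auto simp: feeds_def)
  moreover have "snd G (TV k') \<in> sources m (fst G)" using wf_into[OF w] \<open>k' < fst G\<close> by simp
  ultimately show "x \<in> {..<fst G} \<times> {..<fst G}" by simp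
qed

lemma wf_feeds: "wf_syn m n G \<Longrightarrow> wf (feeds G)"
proof -
  assume w: "wf_syn m n G"
  have "finite (feeds G)" using feeds_sub[OF w] by (rule finite_subset) auto
  thus ?thesis using w unfolding wf_syn_def by (blast intro: finite_acyclic_wf)
qed

lemma wf_synI:
  assumes "inj_on (snd G) (targets n (fst G))"
    "\<And>t. t \<in> targets n (fst G) \<Longrightarrow> snd G t \<in> sources m (fst G)"
    "n = m + fst G" "wf (feeds G)"
  shows "wf_syn m n G"
  unfolding wf_syn_def
proof
  show "bij_betw (snd G) (targets n (fst G)) (sources m (fst G))"
    by (rule bij_by_inj) (use assms in \<open>auto simp: card_targets card_sources\<close>)
  show "acyclic (feeds G)" using assms(4) by (rule wf_acyclic)
qed

inductive rt :: "sgraph \<Rightarrow> src \<Rightarrow> nat \<Rightarrow> bool" for G where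
  rt_in: "rt G (SIn i) i"
| rt_v: "k < fst G \<Longrightarrow> rt G (snd G (TV k)) i \<Longrightarrow> rt G (SV k b) i"

lemma rt_SIn[simp]: "rt G (SIn j) i \<longleftrightarrow> i = j"
  by (auto elim: rt.cases intro: rt.intros)

lemma rt_SV[simp]: "rt G (SV k b) i \<longleftrightarrow> k < fst G \<and> rt G (snd G (TV k)) i"
  by (auto elim: rt.cases intro: rt.intros)

lemma rt_fun: "rt G s i \<Longrightarrow> rt G s i' \<Longrightarrow> i = i'"
  by (induction s i rule: rt.induct) auto

lemma rt_total:
  assumes w: "wf_syn m n G"
  shows "s \<in> sources m (fst G) \<Longrightarrow> \<exists>i<m. rt G s i"
proof (cases s)
  case (SIn i) thus "s \<in> sources m (fst G) \<Longrightarrow> ?thesis" by auto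
next
  case (SV k b)
  have "k < fst G \<longrightarrow> (\<exists>i<m. rt G (SV k b) i)"
  proof (induction k rule: wf_induct[OF wf_feeds[OF w]])
    case (1 k)
    show ?case
    proof
      assume k: "k < fst G"
      hence s: "snd G (TV k) \<in> sources m (fst G)" using wf_into[OF w] by simp
      show "\<exists>i<m. rt G (SV k b) i"
      proof (cases "snd G (TV k)")
        case (SIn i) thus ?thesis using s k by auto
      next
        case (SV k' b')
        hence "(k', k) \<in> feeds G" using k by (auto simp: feeds_def)
        moreover have "k' < fst G" using s SV by simp
        ultimately obtain i where "i < m" "rt G (SV k' b) i" using 1 by blast
        hence "rt G (SV k' b') i" by simp
        thus ?thesis using SV k \<open>i < m\<close> by auto
      qed
    qed
  qed
  thus "s \<in> sources m (fst G) \<Longrightarrow> ?thesis" using SV by auto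
qed

definition aroot :: "sgraph \<Rightarrow> nat \<Rightarrow> nat" where
  "aroot G j = (THE i. rt G (snd G (TOut j)) i)"

lemma aroot_eq: "rt G (snd G (TOut j)) i \<Longrightarrow> aroot G j = i"
  unfolding aroot_def using rt_fun by blast

lemma aroot_rt: assumes "wf_syn m n G" "j < n"
  shows "rt G (snd G (TOut j)) (aroot G j)" "aroot G j < m"
proof -
  have "snd G (TOut j) \<in> sources m (fst G)" using wf_into[OF assms(1)] assms(2) by simp
  then obtain i where "i < m" "rt G (snd G (TOut j)) i"
    using rt_total[OF assms(1)] by blast
  thus "rt G (snd G (TOut j)) (aroot G j)" "aroot G j < m" using aroot_eq by auto
qed

fun rootb :: "sgraph \<Rightarrow> nat + nat \<Rightarrow> nat" where
  "rootb G (Inl i) = i"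
| "rootb G (Inr j) = aroot G j"

definition nrt :: "sgraph \<Rightarrow> node \<Rightarrow> nat \<Rightarrow> bool" where
  "nrt G x i = (case x of NIn i' \<Rightarrow> i = i' | NVx k \<Rightarrow> rt G (SV k False) i
                 | NOut j \<Rightarrow> rt G (snd G (TOut j)) i)"

lemma nrt_src: "nrt G (src_node s) i \<longleftrightarrow> rt G s i"
  by (cases s) (auto simp: nrt_def)

lemma nrt_edge: assumes "t \<in> targets n (fst G)"
  shows "nrt G (tgt_node t) i \<longleftrightarrow> nrt G (src_node (snd G t)) i"
proof -
  have "nrt G (tgt_node t) i \<longleftrightarrow> rt G (snd G t) i" using assms by (cases t) (auto simp: nrt_def)
  thus ?thesis by (simp add: nrt_src)
qed

lemma path_nrt:
  assumes "(x, y) \<in> (und_edges n G \<union> (und_edges n G)\<inverse>)\<^sup>*"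
  shows "nrt G x i \<longleftrightarrow> nrt G y i"
  using assms
proof (induction rule: rtrancl_induct)
  case base thus ?case by simp
next
  case (step y z)
  have "nrt G y i \<longleftrightarrow> nrt G z i"
  proof (cases "(y, z) \<in> und_edges n G")
    case True
    then obtain t where "t \<in> targets n (fst G)" "y = tgt_node t" "z = src_node (snd G t)"
      by (auto simp: und_edges_def)
    thus ?thesis using nrt_edge by blast
  next
    case False
    hence "(z, y) \<in> und_edges n G" using step(2) by auto
    then obtain t where "t \<in> targets n (fst G)" "z = tgt_node t" "y = src_node (snd G t)"
      by (auto simp: und_edges_def)
    thus ?thesis using nrt_edge by blast
  qed
  thus ?case using step by simp
qed

lemma rt_path:
  "rt G s i \<Longrightarrow> (src_node s, NIn i) \<in> (und_edges n G \<union> (und_edges n G)\<inverse>)\<^sup>*"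
proof (induction s i rule: rt.induct)
  case (rt_in i) thus ?case by simp
next
  case (rt_v k i b)
  have "(NVx k, src_node (snd G (TV k))) \<in> und_edges n G"
    using rt_v(1) unfolding und_edges_def by (auto intro!: exI[of _ "TV k"])
  hence "(NVx k, src_node (snd G (TV k))) \<in> und_edges n G \<union> (und_edges n G)\<inverse>" by blast
  thus ?case using rt_v(3) by (simp add: converse_rtrancl_into_rtrancl)
qed

lemma ancestry_char:
  assumes w: "wf_syn m n G"
  shows "ancestry m n G = {(x, y). x \<in> bnd m n \<and> y \<in> bnd m n \<and> rootb G x = rootb G y}"
proof -
  let ?E = "und_edges n G \<union> (und_edges n G)\<inverse>"
  have nb: "nrt G (bnd_node x) (rootb G x)" if "x \<in> bnd m n" for x
    using that aroot_rt[OF w] by (auto simp: bnd_def nrt_def)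
  have pb: "(bnd_node x, NIn (rootb G x)) \<in> ?E\<^sup>*" if "x \<in> bnd m n" for x
  proof -
    { fix j assume j: "j < n"
      have "(NOut j, src_node (snd G (TOut j))) \<in> und_edges n G"
        using j unfolding und_edges_def by (auto intro!: exI[of _ "TOut j"])
      hence "(NOut j, src_node (snd G (TOut j))) \<in> ?E" by blast
      hence "(NOut j, NIn (aroot G j)) \<in> ?E\<^sup>*"
        using rt_path[OF aroot_rt(1)[OF w j], of n] by (simp add: converse_rtrancl_into_rtrancl) }
    thus ?thesis using that by (auto simp: bnd_def)
  qed
  have symE: "sym (?E\<^sup>*)" by (simp add: sym_Un_converse sym_rtrancl)
  have "((x, y) \<in> ancestry m n G) \<longleftrightarrow> x \<in> bnd m n \<and> y \<in> bnd m n \<and> rootb G x = rootb G y" for x y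
  proof -
    show "((x, y) \<in> ancestry m n G) \<longleftrightarrow> x \<in> bnd m n \<and> y \<in> bnd m n \<and> rootb G x = rootb G y"
    proof
      assume "(x, y) \<in> ancestry m n G"
      hence xy: "x \<in> bnd m n" "y \<in> bnd m n" "(bnd_node x, bnd_node y) \<in> ?E\<^sup>*"
        by (auto simp: ancestry_def)
      have "nrt G (bnd_node y) (rootb G x)" using path_nrt[OF xy(3)] nb[OF xy(1)] by simp
      moreover have "nrt G (bnd_node y) (rootb G y)" using nb[OF xy(2)] .
      ultimately have "rootb G x = rootb G y"
        using xy(2) unfolding bnd_def nrt_def by (auto dest: rt_fun)
      thus "x \<in> bnd m n \<and> y \<in> bnd m n \<and> rootb G x = rootb G y" using xy by simp
    next
      assume h: "x \<in> bnd m n \<and> y \<in> bnd m n \<and> rootb G x = rootb G y"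
      have "(NIn (rootb G y), bnd_node y) \<in> ?E\<^sup>*" using pb[of y] h symE by (meson symD)
      hence "(bnd_node x, bnd_node y) \<in> ?E\<^sup>*" using pb[of x] h by (metis rtrancl_trans)
      thus "(x, y) \<in> ancestry m n G" using h by (simp add: ancestry_def)
    qed
  qed
  thus ?thesis by auto
qed

lemma ancestry_eq_iff:
  assumes "wf_syn m n G" "wf_syn m n H"
  shows "ancestry m n G = ancestry m n H \<longleftrightarrow> (\<forall>j<n. aroot G j = aroot H j)"
proof
  assume e: "ancestry m n G = ancestry m n H"
  show "\<forall>j<n. aroot G j = aroot H j"
  proof (intro allI impI)
    fix j assume j: "j < n"
    have "(Inr j, Inl (aroot G j)) \<in> ancestry m n G"
      using aroot_rt[OF assms(1) j] j by (auto simp: ancestry_char[OF assms(1)] bnd_def)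
    hence "(Inr j, Inl (aroot G j)) \<in> ancestry m n H" using e by simp
    thus "aroot G j = aroot H j" by (simp add: ancestry_char[OF assms(2)])
  qed
next
  assume "\<forall>j<n. aroot G j = aroot H j"
  hence "\<forall>x\<in>bnd m n. rootb G x = rootb H x" by (auto simp: bnd_def)
  thus "ancestry m n G = ancestry m n H"
    by (auto simp: ancestry_char[OF assms(1)] ancestry_char[OF assms(2)])
qed

definition cres :: "sgraph \<Rightarrow> src \<Rightarrow> src" where
  "cres G s = (case s of SIn j \<Rightarrow> snd G (TOut j) | SV k b \<Rightarrow> SV (fst G + k) b)"

lemma cres_simps[simp]: "cres G (SIn j) = snd G (TOut j)" "cres G (SV k b) = SV (fst G + k) b"
  by (simp_all add: cres_def)

lemma comp_fst[simp]: "fst (syn_comp H G) = fst G + fst H"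
  by (simp add: syn_comp_def Let_def)

lemma comp_TV: "snd (syn_comp H G) (TV k) =
   (if k < fst G then snd G (TV k) else cres G (snd H (TV (k - fst G))))"
  by (simp add: syn_comp_def Let_def cres_def)

lemma comp_TOut[simp]: "snd (syn_comp H G) (TOut j) = cres G (snd H (TOut j))"
  by (simp add: syn_comp_def Let_def cres_def)

definition tsh :: "nat \<Rightarrow> nat \<Rightarrow> src \<Rightarrow> src" where
  "tsh m v s = (case s of SIn i \<Rightarrow> SIn (m + i) | SV k b \<Rightarrow> SV (v + k) b)"

lemma tsh_simps[simp]: "tsh m v (SIn i) = SIn (m + i)" "tsh m v (SV k b) = SV (v + k) b"
  by (simp_all add: tsh_def)

lemma tens_fst[simp]: "fst (syn_tensor m n G K) = fst G + fst K"
  by (simp add: syn_tensor_def Let_def)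

lemma tens_TV: "snd (syn_tensor m n G K) (TV k) =
   (if k < fst G then snd G (TV k) else tsh m (fst G) (snd K (TV (k - fst G))))"
  by (simp add: syn_tensor_def Let_def tsh_def)

lemma tens_TOut: "snd (syn_tensor m n G K) (TOut j) =
   (if j < n then snd G (TOut j) else tsh m (fst G) (snd K (TOut (j - n))))"
  by (simp add: syn_tensor_def Let_def tsh_def)

lemma sources_mono: "s \<in> sources m v \<Longrightarrow> m \<le> m' \<Longrightarrow> v \<le> v' \<Longrightarrow> s \<in> sources m' v'"
  by (cases s) auto

lemma wf_comp:
  assumes G: "wf_syn m n G" and H: "wf_syn n p H"
  shows "wf_syn m p (syn_comp H G)"
proof -
  let ?C = "syn_comp H G"
  have cres_into: "cres G s \<in> sources m (fst G + fst H)" if "s \<in> sources n (fst H)" for s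
  proof (cases s)
    case (SIn j)
    hence "snd G (TOut j) \<in> sources m (fst G)" using that wf_into[OF G] by simp
    thus ?thesis using SIn sources_mono[of _ m "fst G" m "fst G + fst H"] by simp
  next
    case (SV k b) thus ?thesis using that by simp
  qed
  have Ginto: "snd G (TV k) \<in> sources m (fst G)" if "k < fst G" for k using wf_into[OF G] that by simp
  have into: "snd ?C t \<in> sources m (fst ?C)" if t: "t \<in> targets p (fst ?C)" for t
  proof (cases t)
    case (TV k)
    show ?thesis
    proof (cases "k < fst G")
      case True thus ?thesis using TV Ginto sources_mono by (simp add: comp_TV) (meson le_add1 order_refl)
    next
      case False
      hence "TV (k - fst G) \<in> targets p (fst H)" using t TV by auto
      thus ?thesis using False TV cres_into wf_into[OF H] by (simp add: comp_TV)
    qed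
  next
    case (TOut j) thus ?thesis using t cres_into wf_into[OF H] by auto
  qed
  have cres_inj: "s1 = s2" if "s1 \<in> sources n (fst H)" "s2 \<in> sources n (fst H)" "cres G s1 = cres G s2" for s1 s2
  proof (cases s1; cases s2)
    fix j1 j2 assume "s1 = SIn j1" "s2 = SIn j2"
    thus ?thesis using that wf_inj[OF G, of "TOut j1" "TOut j2"] wf_card[OF G] by simp
  next
    fix j1 k2 b2 assume a: "s1 = SIn j1" "s2 = SV k2 b2"
    thus ?thesis using that wf_into[OF G, of "TOut j1"] by simp
  next
    fix k1 b1 j2 assume a: "s1 = SV k1 b1" "s2 = SIn j2"
    hence "SV (fst G + k1) b1 = snd G (TOut j2)" "snd G (TOut j2) \<in> sources m (fst G)"
      using that wf_into[OF G, of "TOut j2"] by auto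
    hence "SV (fst G + k1) b1 \<in> sources m (fst G)" by simp
    thus ?thesis by simp
  qed (use that in auto)
  have inj: "inj_on (snd ?C) (targets p (fst ?C))"
  proof (rule inj_onI)
    fix t1 t2 assume t1: "t1 \<in> targets p (fst ?C)" and t2: "t2 \<in> targets p (fst ?C)"
      and eq: "snd ?C t1 = snd ?C t2"
    define h where "h t = (case t of TV k \<Rightarrow> TV (k - fst G) | TOut j \<Rightarrow> TOut j)" for t
    have hp: "t \<in> targets p (fst ?C) \<Longrightarrow> \<not> (\<exists>k. t = TV k \<and> k < fst G) \<Longrightarrow>
         h t \<in> targets p (fst H) \<and> snd ?C t = cres G (snd H (h t))" for t
      by (cases t) (auto simp: h_def comp_TV)
    have hinj: "t \<in> targets p (fst ?C) \<Longrightarrow> \<not> (\<exists>k. t = TV k \<and> k < fst G) \<Longrightarrow>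
         t' \<in> targets p (fst ?C) \<Longrightarrow> \<not> (\<exists>k. t' = TV k \<and> k < fst G) \<Longrightarrow> h t = h t' \<Longrightarrow> t = t'" for t t'
      by (cases t; cases t') (auto simp: h_def)
    have mixed: False if "k < fst G" "t \<in> targets p (fst ?C)" "\<not> (\<exists>k. t = TV k \<and> k < fst G)"
        "snd G (TV k) = snd ?C t" for k t
    proof -
      have ht: "h t \<in> targets p (fst H)" "snd G (TV k) = cres G (snd H (h t))" using hp that by auto
      have s: "snd H (h t) \<in> sources n (fst H)" using wf_into[OF H] ht by simp
      show False
      proof (cases "snd H (h t)")
        case (SIn j)
        hence "snd G (TV k) = snd G (TOut j)" "j < n" using ht s by auto
        thus False using wf_inj[OF G, of "TV k" "TOut j"] that by simp
      next
        case (SV k' b)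
        hence "snd G (TV k) = SV (fst G + k') b" using ht by simp
        thus False using Ginto[OF that(1)] by simp
      qed
    qed
    show "t1 = t2"
    proof (cases "\<exists>k. t1 = TV k \<and> k < fst G"; cases "\<exists>k. t2 = TV k \<and> k < fst G")
      assume a1: "\<exists>k. t1 = TV k \<and> k < fst G" and a2: "\<exists>k. t2 = TV k \<and> k < fst G"
      then obtain k1 k2 where "t1 = TV k1" "k1 < fst G" "t2 = TV k2" "k2 < fst G" by auto
      thus ?thesis using eq wf_inj[OF G, of "TV k1" "TV k2"] by (simp add: comp_TV)
    next
      assume a1: "\<exists>k. t1 = TV k \<and> k < fst G" and a2: "\<not> (\<exists>k. t2 = TV k \<and> k < fst G)"
      then obtain k1 where "t1 = TV k1" "k1 < fst G" by auto
      thus ?thesis using mixed[of k1 t2] eq t2 a2 by (simp add: comp_TV)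
    next
      assume a1: "\<not> (\<exists>k. t1 = TV k \<and> k < fst G)" and a2: "\<exists>k. t2 = TV k \<and> k < fst G"
      then obtain k2 where "t2 = TV k2" "k2 < fst G" by auto
      thus ?thesis using mixed[of k2 t1] eq t1 a1 by (simp add: comp_TV)
    next
      assume a1: "\<not> (\<exists>k. t1 = TV k \<and> k < fst G)" and a2: "\<not> (\<exists>k. t2 = TV k \<and> k < fst G)"
      have h1: "h t1 \<in> targets p (fst H)" "snd ?C t1 = cres G (snd H (h t1))" using hp t1 a1 by auto
      have h2: "h t2 \<in> targets p (fst H)" "snd ?C t2 = cres G (snd H (h t2))" using hp t2 a2 by auto
      have "snd H (h t1) = snd H (h t2)"
        using cres_inj[of "snd H (h t1)" "snd H (h t2)"] h1 h2 eq wf_into[OF H] by simp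
      hence "h t1 = h t2" using wf_inj[OF H] h1 h2 by blast
      thus ?thesis using hinj t1 t2 a1 a2 by blast
    qed
  qed
  have fsub: "feeds ?C \<subseteq> (feeds G \<union> {(k, k'). k < fst G \<and> fst G \<le> k'}) \<union>
      {(k, k'). fst G \<le> k \<and> fst G \<le> k' \<and> (k - fst G, k' - fst G) \<in> feeds H}"
  proof (rule subrelI)
    fix k k' assume f: "(k, k') \<in> feeds ?C"
    obtain b where k': "k' < fst G + fst H" "snd ?C (TV k') = SV k b" using f by (auto simp: feeds_def)
    show "(k, k') \<in> (feeds G \<union> {(k, k'). k < fst G \<and> fst G \<le> k'}) \<union>
      {(k, k'). fst G \<le> k \<and> fst G \<le> k' \<and> (k - fst G, k' - fst G) \<in> feeds H}"
    proof (cases "k' < fst G")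
      case True thus ?thesis using k' by (auto simp: feeds_def comp_TV)
    next
      case False
      hence e: "cres G (snd H (TV (k' - fst G))) = SV k b" using k' by (simp add: comp_TV)
      have s: "snd H (TV (k' - fst G)) \<in> sources n (fst H)" using wf_into[OF H] False k' by simp
      show ?thesis
      proof (cases "snd H (TV (k' - fst G))")
        case (SIn j)
        hence "snd G (TOut j) = SV k b" "j < n" using e s by auto
        hence "k < fst G" using wf_into[OF G, of "TOut j"] by simp
        thus ?thesis using False by simp
      next
        case (SV k2 b2)
        hence "k = fst G + k2" "b = b2" using e by auto
        hence "(k - fst G, k' - fst G) \<in> feeds H" using SV False k' by (auto simp: feeds_def)
        thus ?thesis using False \<open>k = fst G + k2\<close> by simp
      qed
    qed
  qed
  have wfC: "wf (feeds ?C)"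
  proof (rule wf_subset[OF _ fsub], rule wf_Un, rule wf_Un)
    show "wf (feeds G)" by (rule wf_feeds[OF G])
    show "wf {(k, k'). k < fst G \<and> fst G \<le> k'}"
      by (rule wf_subset[OF wf_measure[of "\<lambda>k. if k < fst G then 0 else 1::nat"]]) auto
    show "Domain (feeds G) \<inter> Range {(k, k'). k < fst G \<and> fst G \<le> k'} = {}"
      using feeds_sub[OF G] by auto
    show "wf {(k, k'). fst G \<le> k \<and> fst G \<le> k' \<and> (k - fst G, k' - fst G) \<in> feeds H}"
      by (rule wf_subset[OF wf_inv_image[OF wf_feeds[OF H], of "\<lambda>k. k - fst G"]]) auto
    show "Domain (feeds G \<union> {(k, k'). k < fst G \<and> fst G \<le> k'}) \<inter>
        Range {(k, k'). fst G \<le> k \<and> fst G \<le> k' \<and> (k - fst G, k' - fst G) \<in> feeds H} = {}"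
      using feeds_sub[OF G] by auto
  qed
  show ?thesis
    by (rule wf_synI[OF inj into]) (use wfC wf_card[OF G] wf_card[OF H] in auto)
qed

lemma tsh_notin: "s \<in> sources m' v' \<Longrightarrow> tsh m v s \<notin> sources m v"
  by (cases s) auto

lemma tsh_into: "s \<in> sources m' v' \<Longrightarrow> tsh m v s \<in> sources (m + m') (v + v')"
  by (cases s) auto

lemma tsh_inj: "tsh m v s1 = tsh m v s2 \<Longrightarrow> s1 = s2"
  by (cases s1; cases s2) auto

lemma wf_tensor:
  assumes G: "wf_syn m n G" and K: "wf_syn m' n' K"
  shows "wf_syn (m + m') (n + n') (syn_tensor m n G K)"
proof -
  let ?T = "syn_tensor m n G K"
  define gp where "gp t = (case t of TV k \<Rightarrow> k < fst G | TOut j \<Rightarrow> j < n)" for t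
  define h where "h t = (case t of TV k \<Rightarrow> TV (k - fst G) | TOut j \<Rightarrow> TOut (j - n))" for t
  have gpart: "t \<in> targets (n + n') (fst ?T) \<Longrightarrow> gp t \<Longrightarrow> t \<in> targets n (fst G) \<and> snd ?T t = snd G t" for t
    by (cases t) (auto simp: gp_def tens_TV tens_TOut)
  have kpart: "t \<in> targets (n + n') (fst ?T) \<Longrightarrow> \<not> gp t \<Longrightarrow>
      h t \<in> targets n' (fst K) \<and> snd ?T t = tsh m (fst G) (snd K (h t))" for t
    by (cases t) (auto simp: gp_def h_def tens_TV tens_TOut)
  have hinj: "t \<in> targets (n + n') (fst ?T) \<Longrightarrow> \<not> gp t \<Longrightarrow> t' \<in> targets (n + n') (fst ?T) \<Longrightarrow>
      \<not> gp t' \<Longrightarrow> h t = h t' \<Longrightarrow> t = t'" for t t'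
    by (cases t; cases t') (auto simp: gp_def h_def)
  have into: "snd ?T t \<in> sources (m + m') (fst ?T)" if t: "t \<in> targets (n + n') (fst ?T)" for t
  proof (cases "gp t")
    case True
    hence "snd G t \<in> sources m (fst G)" "snd ?T t = snd G t" using gpart[OF t] wf_into[OF G] by auto
    thus ?thesis using sources_mono[of "snd G t" m "fst G" "m + m'" "fst G + fst K"] by simp
  next
    case False
    hence "snd K (h t) \<in> sources m' (fst K)" "snd ?T t = tsh m (fst G) (snd K (h t))"
      using kpart[OF t] wf_into[OF K] by auto
    thus ?thesis using tsh_into by simp
  qed
  have inj: "inj_on (snd ?T) (targets (n + n') (fst ?T))"
  proof (rule inj_onI)
    fix t1 t2 assume t1: "t1 \<in> targets (n + n') (fst ?T)" and t2: "t2 \<in> targets (n + n') (fst ?T)"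
      and eq: "snd ?T t1 = snd ?T t2"
    show "t1 = t2"
    proof (cases "gp t1"; cases "gp t2")
      assume "gp t1" "gp t2"
      thus ?thesis using gpart[OF t1] gpart[OF t2] eq wf_inj[OF G] by metis
    next
      assume a: "gp t1" "\<not> gp t2"
      have "snd G t1 \<in> sources m (fst G)" using gpart[OF t1 a(1)] wf_into[OF G] by auto
      moreover have "tsh m (fst G) (snd K (h t2)) \<notin> sources m (fst G)"
        using kpart[OF t2 a(2)] wf_into[OF K] tsh_notin by blast
      ultimately show ?thesis using gpart[OF t1 a(1)] kpart[OF t2 a(2)] eq by simp
    next
      assume a: "\<not> gp t1" "gp t2"
      have "snd G t2 \<in> sources m (fst G)" using gpart[OF t2 a(2)] wf_into[OF G] by auto
      moreover have "tsh m (fst G) (snd K (h t1)) \<notin> sources m (fst G)"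
        using kpart[OF t1 a(1)] wf_into[OF K] tsh_notin by blast
      ultimately show ?thesis using gpart[OF t2 a(2)] kpart[OF t1 a(1)] eq by simp
    next
      assume a: "\<not> gp t1" "\<not> gp t2"
      have "snd K (h t1) = snd K (h t2)" using kpart[OF t1 a(1)] kpart[OF t2 a(2)] eq tsh_inj by metis
      hence "h t1 = h t2" using wf_inj[OF K] kpart[OF t1 a(1)] kpart[OF t2 a(2)] by blast
      thus ?thesis using hinj t1 t2 a by blast
    qed
  qed
  have fsub: "feeds ?T \<subseteq> feeds G \<union>
      {(k, k'). fst G \<le> k \<and> fst G \<le> k' \<and> (k - fst G, k' - fst G) \<in> feeds K}"
  proof (rule subrelI)
    fix k k' assume f: "(k, k') \<in> feeds ?T"
    obtain b where k': "k' < fst G + fst K" "snd ?T (TV k') = SV k b" using f by (auto simp: feeds_def)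
    show "(k, k') \<in> feeds G \<union> {(k, k'). fst G \<le> k \<and> fst G \<le> k' \<and> (k - fst G, k' - fst G) \<in> feeds K}"
    proof (cases "k' < fst G")
      case True thus ?thesis using k' by (auto simp: feeds_def tens_TV)
    next
      case False
      hence e: "tsh m (fst G) (snd K (TV (k' - fst G))) = SV k b" using k' by (simp add: tens_TV)
      then obtain k2 where "snd K (TV (k' - fst G)) = SV k2 b" "k = fst G + k2"
        by (cases "snd K (TV (k' - fst G))") auto
      thus ?thesis using False k' by (auto simp: feeds_def)
    qed
  qed
  have wfT: "wf (feeds ?T)"
  proof (rule wf_subset[OF _ fsub], rule wf_Un)
    show "wf (feeds G)" by (rule wf_feeds[OF G])
    show "wf {(k, k'). fst G \<le> k \<and> fst G \<le> k' \<and> (k - fst G, k' - fst G) \<in> feeds K}"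
      by (rule wf_subset[OF wf_inv_image[OF wf_feeds[OF K], of "\<lambda>k. k - fst G"]]) auto
    show "Domain (feeds G) \<inter>
        Range {(k, k'). fst G \<le> k \<and> fst G \<le> k' \<and> (k - fst G, k' - fst G) \<in> feeds K} = {}"
      using feeds_sub[OF G] by auto
  qed
  show ?thesis
    by (rule wf_synI[OF inj into]) (use wfT wf_card[OF G] wf_card[OF K] in auto)
qed

lemma rt_comp_G: "rt G s i \<Longrightarrow> rt (syn_comp H G) s i"
  by (induction s i rule: rt.induct) (auto simp: comp_TV)

lemma rt_comp_H: "rt H s j \<Longrightarrow> rt G (snd G (TOut j)) i \<Longrightarrow> rt (syn_comp H G) (cres G s) i"
  by (induction s j rule: rt.induct) (auto simp: comp_TV rt_comp_G)

lemma aroot_comp: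
  assumes G: "wf_syn m n G" and H: "wf_syn n p H" and j: "j < p"
  shows "aroot (syn_comp H G) j = aroot G (aroot H j)"
proof -
  have "rt (syn_comp H G) (cres G (snd H (TOut j))) (aroot G (aroot H j))"
    using rt_comp_H[OF aroot_rt(1)[OF H j] aroot_rt(1)[OF G aroot_rt(2)[OF H j]]] .
  thus ?thesis by (simp add: aroot_eq)
qed

lemma rt_tens_G: "rt G s i \<Longrightarrow> rt (syn_tensor m n G K) s i"
  by (induction s i rule: rt.induct) (auto simp: tens_TV)

lemma rt_tens_K: "rt K s i \<Longrightarrow> rt (syn_tensor m n G K) (tsh m (fst G) s) (m + i)"
  by (induction s i rule: rt.induct) (auto simp: tens_TV)

lemma aroot_tensor:
  assumes G: "wf_syn m n G" and K: "wf_syn m' n' K" and j: "j < n + n'"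
  shows "aroot (syn_tensor m n G K) j = (if j < n then aroot G j else m + aroot K (j - n))"
proof (cases "j < n")
  case True
  have "rt (syn_tensor m n G K) (snd G (TOut j)) (aroot G j)"
    using rt_tens_G[OF aroot_rt(1)[OF G True]] .
  thus ?thesis using True by (simp add: aroot_eq tens_TOut)
next
  case False
  have "rt (syn_tensor m n G K) (tsh m (fst G) (snd K (TOut (j - n)))) (m + aroot K (j - n))"
    using rt_tens_K[OF aroot_rt(1)[OF K]] False j by simp
  thus ?thesis using False by (simp add: aroot_eq tens_TOut)
qed

lemma rt_iso:
  assumes "bij_betw p {..<fst G} {..<fst H}"
    "\<forall>t\<in>targets n (fst G). ren_src p (snd G t) = snd H (ren_tgt p t)"
  shows "rt G s i \<Longrightarrow> rt H (ren_src p s) i"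
proof (induction s i rule: rt.induct)
  case (rt_in i) thus ?case by simp
next
  case (rt_v k i b)
  have "p k < fst H" using assms(1) rt_v(1) by (auto simp: bij_betw_def)
  moreover have "ren_src p (snd G (TV k)) = snd H (TV (p k))" using assms(2) rt_v(1) by auto
  ultimately show ?case using rt_v(3) by simp
qed

lemma aroot_iso:
  assumes G: "wf_syn m n G" and iso: "syn_iso n G H" and j: "j < n"
  shows "aroot H j = aroot G j"
proof -
  obtain p where p: "bij_betw p {..<fst G} {..<fst H}"
    "\<forall>t\<in>targets n (fst G). ren_src p (snd G t) = snd H (ren_tgt p t)"
    using iso by (auto simp: syn_iso_def)
  have "rt H (ren_src p (snd G (TOut j))) (aroot G j)" by (rule rt_iso[OF p aroot_rt(1)[OF G j]])
  moreover have "ren_src p (snd G (TOut j)) = snd H (TOut j)" using p(2) j by auto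
  ultimately show ?thesis by (simp add: aroot_eq)
qed

lemma ren_id[simp]: "ren_src id s = s" "ren_tgt id t = t"
  by (cases s; simp) (cases t; simp)

lemma iso_id:
  assumes "fst G = fst H" "\<And>t. t \<in> targets n (fst G) \<Longrightarrow> snd G t = snd H t"
  shows "syn_iso n G H"
  unfolding syn_iso_def using assms by (auto intro!: exI[of _ id])

definition perm :: "nat \<Rightarrow> (nat \<Rightarrow> nat) \<Rightarrow> sgraph" where
  "perm n f = (0, \<lambda>t. case t of TOut j \<Rightarrow> SIn (f j) | TV k \<Rightarrow> SIn 0)"

lemma perm_simps[simp]: "fst (perm n f) = 0" "snd (perm n f) (TOut j) = SIn (f j)"
  by (simp_all add: perm_def)

lemma targets_0: "t \<in> targets n 0 \<longleftrightarrow> (\<exists>j<n. t = TOut j)"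
  by (cases t) auto

lemma feeds_0: "fst G = 0 \<Longrightarrow> feeds G = {}"
  by (auto simp: feeds_def)

lemma wf_perm:
  assumes "inj_on f {..<n}" "\<And>j. j < n \<Longrightarrow> f j < n"
  shows "wf_syn n n (perm n f)"
proof (rule wf_synI)
  show "inj_on (snd (perm n f)) (targets n (fst (perm n f)))"
    using assms(1) by (auto simp: inj_on_def targets_0)
  show "\<And>t. t \<in> targets n (fst (perm n f)) \<Longrightarrow> snd (perm n f) t \<in> sources n (fst (perm n f))"
    using assms(2) by (auto simp: targets_0)
qed (simp_all add: feeds_0)

lemma aroot_perm[simp]: "aroot (perm n f) j = f j"
  by (rule aroot_eq) simp

lemma perm_bij_wf:
  assumes "bij_betw f {..<n} {..<n}" shows "wf_syn n n (perm n f)"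
  using assms by (intro wf_perm) (auto simp: bij_betw_def)

lemma syn_id_perm: "syn_id n = perm n id"
  by (auto simp: syn_id_def perm_def fun_eq_iff split: tgt.split)

lemma wf_id: "wf_syn n n (syn_id n)"
  unfolding syn_id_perm by (rule wf_perm) auto

lemma aroot_id[simp]: "aroot (syn_id n) j = j"
  by (simp add: syn_id_perm)

lemma wf_swap: "wf_syn 2 2 syn_swap"
proof -
  have "syn_swap = perm 2 (\<lambda>j. if j = 0 then 1 else 0)"
    by (auto simp: syn_swap_def perm_def fun_eq_iff split: tgt.split)
  moreover have "wf_syn 2 2 (perm 2 (\<lambda>j. if j = 0 then 1 else 0))"
    by (rule wf_perm) (auto simp: inj_on_def)
  ultimately show ?thesis by simp
qed

lemma wf_delta: "wf_syn 1 2 syn_delta"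
proof (rule wf_synI)
  show "inj_on (snd syn_delta) (targets 2 (fst syn_delta))"
    unfolding inj_on_def syn_delta_def
    by (auto split: tgt.splits)
  show "\<And>t. t \<in> targets 2 (fst syn_delta) \<Longrightarrow> snd syn_delta t \<in> sources 1 (fst syn_delta)"
    by (auto simp: syn_delta_def split: tgt.splits)
  show "wf (feeds syn_delta)"
    by (rule wf_subset[of "{}"]) (auto simp: feeds_def syn_delta_def)
qed (simp add: syn_delta_def)

definition lay :: "nat \<Rightarrow> nat \<Rightarrow> sgraph" where
  "lay m a = (1, \<lambda>t. case t of TV k \<Rightarrow> SIn a
      | TOut j \<Rightarrow> (if j = a then SV 0 False else if j = m then SV 0 True else SIn j))"

lemma lay_simps[simp]: "fst (lay m a) = 1" "snd (lay m a) (TV k) = SIn a"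
  "snd (lay m a) (TOut j) = (if j = a then SV 0 False else if j = m then SV 0 True else SIn j)"
  by (simp_all add: lay_def)

lemma wf_lay: assumes "a < m" shows "wf_syn m (Suc m) (lay m a)"
proof (rule wf_synI)
  show "inj_on (snd (lay m a)) (targets (Suc m) (fst (lay m a)))"
  proof (rule inj_onI)
    fix t1 t2 assume "t1 \<in> targets (Suc m) (fst (lay m a))" "t2 \<in> targets (Suc m) (fst (lay m a))"
      "snd (lay m a) t1 = snd (lay m a) t2"
    thus "t1 = t2" using assms by (cases t1; cases t2) (auto split: if_splits)
  qed
  show "\<And>t. t \<in> targets (Suc m) (fst (lay m a)) \<Longrightarrow> snd (lay m a) t \<in> sources m (fst (lay m a))"
    subgoal for t using assms by (cases t) auto done
  show "wf (feeds (lay m a))"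
    by (rule wf_subset[of "{}"]) (auto simp: feeds_def)
qed simp

lemma aroot_lay: "a < m \<Longrightarrow> j < Suc m \<Longrightarrow> aroot (lay m a) j = (if j = m then a else j)"
  by (rule aroot_eq) auto

lemma aroot_lt1: "wf_syn 1 n G \<Longrightarrow> j < n \<Longrightarrow> aroot G j = 0"
  using aroot_rt(2) by fastforce

lemma cc_wf: "cocom_cong m n G H \<Longrightarrow> wf_syn m n G \<and> wf_syn m n H"
proof (induction rule: cocom_cong.induct)
  case coassoc
  have e: "(1::nat) + 1 = 2" "(2::nat) + 1 = 3" "(1::nat) + 2 = 3" by simp_all
  have t1: "wf_syn 2 3 (syn_tensor 1 2 syn_delta (syn_id 1))"
    using wf_tensor[OF wf_delta wf_id[of 1]] unfolding e .
  have t2: "wf_syn 2 3 (syn_tensor 1 1 (syn_id 1) syn_delta)"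
    using wf_tensor[OF wf_id[of 1] wf_delta] unfolding e .
  show ?case using wf_comp[OF wf_delta t1] wf_comp[OF wf_delta t2] by simp
next
  case cocomm
  show ?case using wf_comp[OF wf_delta wf_swap] wf_delta by simp
qed (auto intro: wf_comp wf_tensor)

lemma cc_sound: "cocom_cong m n G H \<Longrightarrow> \<forall>j<n. aroot G j = aroot H j"
proof (induction rule: cocom_cong.induct)
  case (iso m n G H) thus ?case using aroot_iso by metis
next
  case coassoc thus ?case using cc_wf[OF cocom_cong.coassoc] aroot_lt1 by metis
next
  case cocomm thus ?case using cc_wf[OF cocom_cong.cocomm] aroot_lt1 by metis
next
  case (sym m n G H) thus ?case by simp
next
  case (trans m n G H K) thus ?case by simp
next
  case (comp_post m n G H p K)
  have w: "wf_syn m n G" "wf_syn m n H" using cc_wf[OF comp_post(1)] by auto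
  show ?case using comp_post aroot_comp[OF w(1) comp_post(2)] aroot_comp[OF w(2) comp_post(2)]
      aroot_rt(2)[OF comp_post(2)] by simp
next
  case (comp_pre n p G H m K)
  have w: "wf_syn n p G" "wf_syn n p H" using cc_wf[OF comp_pre(1)] by auto
  show ?case using comp_pre aroot_comp[OF comp_pre(2) w(1)] aroot_comp[OF comp_pre(2) w(2)]
      aroot_rt(2)[OF w(1)] by simp
next
  case (tens_l m n G H m' n' K)
  have w: "wf_syn m n G" "wf_syn m n H" using cc_wf[OF tens_l(1)] by auto
  show ?case using tens_l aroot_tensor[OF w(1) tens_l(2)] aroot_tensor[OF w(2) tens_l(2)] by simp
next
  case (tens_r m' n' G H m n K)
  have w: "wf_syn m' n' G" "wf_syn m' n' H" using cc_wf[OF tens_r(1)] by auto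
  show ?case using tens_r aroot_tensor[OF tens_r(2) w(1)] aroot_tensor[OF tens_r(2) w(2)] by simp
qed

lemma existence:
  "\<forall>m f. m \<le> n \<and> n - m = d \<and> (\<forall>j<n. f j < m) \<and> (\<forall>i<m. \<exists>j<n. f j = i) \<longrightarrow>
     (\<exists>G. wf_syn m n G \<and> (\<forall>j<n. aroot G j = f j))"
proof (induction d)
  case 0
  show ?case
  proof (intro allI impI)
    fix m f assume a: "m \<le> n \<and> n - m = 0 \<and> (\<forall>j<n. f j < m) \<and> (\<forall>i<m. \<exists>j<n. f j = i)"
    hence mn: "m = n" by simp
    have "f ` {..<n} = {..<n}" using a mn by fastforce
    hence "inj_on f {..<n}" by (simp add: eq_card_imp_inj_on)
    thus "\<exists>G. wf_syn m n G \<and> (\<forall>j<n. aroot G j = f j)"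
      using a mn by (intro exI[of _ "perm n f"]) (auto intro: wf_perm)
  qed
next
  case (Suc d)
  show ?case
  proof (intro allI impI)
    fix m f assume a: "m \<le> n \<and> n - m = Suc d \<and> (\<forall>j<n. f j < m) \<and> (\<forall>i<m. \<exists>j<n. f j = i)"
    have "\<not> inj_on f {..<n}"
    proof
      assume "inj_on f {..<n}"
      hence "card (f ` {..<n}) = n" by (simp add: card_image)
      moreover have "f ` {..<n} \<subseteq> {..<m}" using a by auto
      hence "card (f ` {..<n}) \<le> m" by (metis card_lessThan card_mono finite_lessThan)
      ultimately show False using a by simp
    qed
    then obtain j1 j2 where j: "j1 < n" "j2 < n" "j1 \<noteq> j2" "f j1 = f j2"
      unfolding inj_on_def by auto
    define f' where "f' = f(j2 := m)"
    have "\<exists>G. wf_syn (Suc m) n G \<and> (\<forall>j<n. aroot G j = f' j)"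
    proof (rule Suc.IH[rule_format], intro conjI)
      show "Suc m \<le> n" "n - Suc m = d" using a by auto
      show "\<forall>j<n. f' j < Suc m" using a by (auto simp: f'_def)
      show "\<forall>i<Suc m. \<exists>j<n. f' j = i"
      proof (intro allI impI)
        fix i assume i: "i < Suc m"
        show "\<exists>j<n. f' j = i"
        proof (cases "i = m")
          case True thus ?thesis using j by (auto simp: f'_def)
        next
          case False
          hence "i < m" using i by simp
          then obtain j where "j < n" "f j = i" using a by blast
          show ?thesis
          proof (cases "j = j2")
            case True thus ?thesis using j False \<open>f j = i\<close> by (auto simp: f'_def intro!: exI[of _ j1])
          next
            case False thus ?thesis using \<open>j < n\<close> \<open>f j = i\<close> by (auto simp: f'_def intro!: exI[of _ j])
          qed
        qed
      qed
    qed
    then obtain G where G: "wf_syn (Suc m) n G" "\<forall>j<n. aroot G j = f' j" by blast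
    have am: "f j2 < m" using a j by auto
    show "\<exists>G. wf_syn m n G \<and> (\<forall>j<n. aroot G j = f j)"
    proof (intro exI conjI)
      show "wf_syn m n (syn_comp G (lay m (f j2)))" by (rule wf_comp[OF wf_lay[OF am] G(1)])
      show "\<forall>j<n. aroot (syn_comp G (lay m (f j2))) j = f j"
      proof (intro allI impI)
        fix j assume jn: "j < n"
        have "aroot G j < Suc m" using aroot_rt(2)[OF G(1) jn] .
        hence "aroot (syn_comp G (lay m (f j2))) j = (if f' j = m then f j2 else f' j)"
          using aroot_comp[OF wf_lay[OF am] G(1) jn] aroot_lay[OF am] G(2) jn by simp
        thus "aroot (syn_comp G (lay m (f j2))) j = f j" using a jn by (auto simp: f'_def)
      qed
    qed
  qed
qed

lemma exists_graph:
  assumes "\<And>j. j < n \<Longrightarrow> f j < m" "\<And>i. i < m \<Longrightarrow> \<exists>j<n. f j = i" "m \<le> n"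
  shows "\<exists>G. wf_syn m n G \<and> (\<forall>j<n. aroot G j = f j)"
  using existence[of n "n - m"] assms by blast

definition sw :: "nat \<Rightarrow> nat \<Rightarrow> nat \<Rightarrow> nat" where
  "sw a b x = (if x = a then b else if x = b then a else x)"

lemma sw_sw[simp]: "sw a b (sw a b x) = x" by (simp add: sw_def)
lemma sw_eq_iff: "sw a b x = sw a b y \<longleftrightarrow> x = y" by (metis sw_sw)

lemma ren_src_sw[simp]: "ren_src (sw a b) (ren_src (sw a b) s) = s" by (cases s) auto
lemma ren_tgt_sw[simp]: "ren_tgt (sw a b) (ren_tgt (sw a b) t) = t" by (cases t) auto

fun dec :: "nat \<Rightarrow> nat \<Rightarrow> src \<Rightarrow> src" where
  "dec m a (SIn j) = SIn j"
| "dec m a (SV k b) = (if k = 0 then SIn (if b then m else a) else SV (k - 1) b)"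

fun inc :: "tgt \<Rightarrow> tgt" where
  "inc (TV k) = TV (Suc k)"
| "inc (TOut j) = TOut j"

lemma peel:
  assumes G: "wf_syn m n G" and v: "fst G = Suc v"
  shows "\<exists>a G'. a < m \<and> wf_syn (Suc m) n G' \<and> syn_iso n G (syn_comp G' (lay m a))"
proof -
  obtain k0 where k0: "k0 < Suc v" "\<And>y. (y, k0) \<in> feeds G \<Longrightarrow> y \<notin> {..<Suc v}"
    using wfE_min[OF wf_feeds[OF G], of 0 "{..<Suc v}"] by auto
  have s0: "snd G (TV k0) \<in> sources m (Suc v)" using wf_into[OF G] k0(1) v by simp
  obtain a where a: "snd G (TV k0) = SIn a" "a < m"
  proof (cases "snd G (TV k0)")
    case (SIn i) thus ?thesis using that s0 by simp
  next
    case (SV k b)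
    hence "(k, k0) \<in> feeds G" using k0(1) v by (auto simp: feeds_def)
    thus ?thesis using k0(2) s0 SV by auto
  qed
  define p where "p = sw 0 k0"
  have pk: "p k < Suc v \<longleftrightarrow> k < Suc v" for k using k0(1) by (auto simp: p_def sw_def)
  have p0: "p k = 0 \<longleftrightarrow> k = k0" for k by (auto simp: p_def sw_def)
  have pk0: "p k = k0 \<longleftrightarrow> k = 0" for k by (auto simp: p_def sw_def)
  define G' where "G' = (v, \<lambda>t. dec m a (ren_src p (snd G (ren_tgt p (inc t)))))"
  have G'fst[simp]: "fst G' = v" by (simp add: G'_def)
  have G'snd: "snd G' t = dec m a (ren_src p (snd G (ren_tgt p (inc t))))" for t by (simp add: G'_def)
  have tgt_ok: "ren_tgt p (inc u) \<in> targets n (fst G) \<and> ren_tgt p (inc u) \<noteq> TV k0"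
    if "u \<in> targets n v" for u
    using that v pk pk0 by (cases u) auto
  have Y: "ren_src p (snd G (ren_tgt p (inc u))) \<in> sources m (Suc v) \<and>
           ren_src p (snd G (ren_tgt p (inc u))) \<noteq> SIn a" if "u \<in> targets n v" for u
  proof -
    let ?x = "snd G (ren_tgt p (inc u))"
    have x: "?x \<in> sources m (Suc v)" using wf_into[OF G] tgt_ok[OF that] v by simp
    have "?x \<noteq> SIn a"
    proof
      assume "?x = SIn a"
      hence "ren_tgt p (inc u) = TV k0"
        using wf_inj[OF G, of "ren_tgt p (inc u)" "TV k0"] tgt_ok[OF that] a k0(1) v by simp
      thus False using tgt_ok[OF that] by simp
    qed
    thus ?thesis using x pk by (cases ?x) auto
  qed
  have dec_into: "y \<in> sources m (Suc v) \<Longrightarrow> dec m a y \<in> sources (Suc m) v" for y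
    using a(2) by (cases y) auto
  have dec_inj: "y1 \<in> sources m (Suc v) \<Longrightarrow> y1 \<noteq> SIn a \<Longrightarrow> y2 \<in> sources m (Suc v) \<Longrightarrow> y2 \<noteq> SIn a
      \<Longrightarrow> dec m a y1 = dec m a y2 \<Longrightarrow> y1 = y2" for y1 y2
    using a(2) by (cases y1; cases y2) (auto split: if_splits)
  have res_dec: "cres (lay m a) (dec m a y) = y" if "y \<in> sources m (Suc v)" "y \<noteq> SIn a" for y
    using that a(2) by (cases y) auto
  have ren_inj: "ren_src p s1 = ren_src p s2 \<Longrightarrow> s1 = s2" for s1 s2
    by (metis p_def ren_src_sw)
  have wfG': "wf_syn (Suc m) n G'"
  proof (rule wf_synI)
    show "inj_on (snd G') (targets n (fst G'))"
    proof (rule inj_onI)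
      fix u1 u2 assume u: "u1 \<in> targets n (fst G')" "u2 \<in> targets n (fst G')" "snd G' u1 = snd G' u2"
      have "ren_src p (snd G (ren_tgt p (inc u1))) = ren_src p (snd G (ren_tgt p (inc u2)))"
        using dec_inj Y u by (simp add: G'snd)
      hence "snd G (ren_tgt p (inc u1)) = snd G (ren_tgt p (inc u2))" by (rule ren_inj)
      hence "ren_tgt p (inc u1) = ren_tgt p (inc u2)"
        using wf_inj[OF G] tgt_ok u by simp
      hence "inc u1 = inc u2" by (metis p_def ren_tgt_sw)
      thus "u1 = u2" by (cases u1; cases u2) auto
    qed
    show "\<And>t. t \<in> targets n (fst G') \<Longrightarrow> snd G' t \<in> sources (Suc m) (fst G')"
      using Y dec_into by (simp add: G'snd)
    show "n = Suc m + fst G'" using wf_card[OF G] v by simp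
    have "feeds G' \<subseteq> inv_image (feeds G) (\<lambda>k. p (Suc k))"
    proof (rule subrelI)
      fix k k' assume f: "(k, k') \<in> feeds G'"
      then obtain b where kb: "k' < v" "snd G' (TV k') = SV k b" by (auto simp: feeds_def)
      let ?y = "ren_src p (snd G (TV (p (Suc k'))))"
      have "dec m a ?y = SV k b" using kb by (simp add: G'snd)
      hence "?y = SV (Suc k) b" by (cases ?y) (auto split: if_splits)
      hence "snd G (TV (p (Suc k'))) = SV (p (Suc k)) b"
        by (cases "snd G (TV (p (Suc k')))") (auto simp: p_def, metis sw_sw)
      moreover have "p (Suc k') < fst G" using pk kb v by simp
      ultimately show "(k, k') \<in> inv_image (feeds G) (\<lambda>k. p (Suc k))"
        by (auto simp: feeds_def)
    qed
    thus "wf (feeds G')" using wf_subset wf_inv_image wf_feeds[OF G] by blast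
  qed
  have iso: "syn_iso n G (syn_comp G' (lay m a))"
    unfolding syn_iso_def
  proof (intro conjI exI[of _ p] ballI)
    show "fst G = fst (syn_comp G' (lay m a))" using v by simp
    show "bij_betw p {..<fst G} {..<fst (syn_comp G' (lay m a))}"
      unfolding bij_betw_def inj_on_def using v pk
      by (auto simp: p_def sw_eq_iff) (metis image_eqI lessThan_iff sw_sw)
    fix t assume t: "t \<in> targets n (fst G)"
    show "ren_src p (snd G t) = snd (syn_comp G' (lay m a)) (ren_tgt p t)"
    proof (cases "t = TV k0")
      case True thus ?thesis using a by (simp add: comp_TV p_def sw_def)
    next
      case False
      define u where "u = (case ren_tgt p t of TV k \<Rightarrow> TV (k - 1) | TOut j \<Rightarrow> TOut j)"
      have iu: "inc u = ren_tgt p t"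
      proof (cases t)
        case (TV k)
        hence "p k \<noteq> 0" using False p0 by simp
        thus ?thesis using TV by (simp add: u_def)
      qed (simp add: u_def)
      have ut: "u \<in> targets n v"
      proof (cases t)
        case (TV k)
        hence "p k \<noteq> 0" "p k < Suc v" using False p0 pk t v by simp_all
        thus ?thesis using TV by (simp add: u_def)
      qed (use t in \<open>simp add: u_def\<close>)
      have "snd (syn_comp G' (lay m a)) (inc u) = cres (lay m a) (snd G' u)"
        by (cases u) (auto simp: comp_TV)
      also have "\<dots> = ren_src p (snd G (ren_tgt p (inc u)))"
        using res_dec Y[OF ut] by (simp add: G'snd)
      also have "\<dots> = ren_src p (snd G t)" using iu by (simp add: p_def)
      finally show ?thesis using iu by simp
    qed
  qed
  show ?thesis using a(2) wfG' iso by blast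
qed

lemma cres_perm[simp]: "cres (perm m f) (SIn i) = SIn (f i)" "cres (perm m f) (SV k b) = SV k b"
  by simp_all

lemma comp_assoc: "syn_comp K (syn_comp L M) = syn_comp (syn_comp K L) M"
  by (auto simp: syn_comp_def Let_def fun_eq_iff split: tgt.split src.split)

definition ctx :: "nat \<Rightarrow> (nat \<Rightarrow> nat) \<Rightarrow> nat \<Rightarrow> (nat \<Rightarrow> nat) \<Rightarrow> nat \<Rightarrow> nat \<Rightarrow> sgraph \<Rightarrow> sgraph" where
  "ctx m pi N rho q r Z = syn_comp (perm N rho) (syn_comp (syn_tensor 1 q Z (syn_id r)) (perm m pi))"

lemma ctx_fst[simp]: "fst (ctx m pi N rho q r Z) = fst Z"
  by (simp add: ctx_def syn_id_def)

lemma ctx_TV: "k < fst Z \<Longrightarrow> snd (ctx m pi N rho q r Z) (TV k) = cres (perm m pi) (snd Z (TV k))"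
  by (simp add: ctx_def comp_TV tens_TV syn_id_def)

lemma ctx_TOut: "snd (ctx m pi N rho q r Z) (TOut j) =
   (if rho j < q then cres (perm m pi) (snd Z (TOut (rho j))) else SIn (pi (Suc (rho j - q))))"
  by (simp add: ctx_def comp_TV tens_TOut syn_id_def)

lemma cc_ctx:
  assumes "cocom_cong 1 q X Y" "m = Suc r" "wf_syn m m (perm m pi)" "wf_syn (q + r) n (perm N rho)"
  shows "cocom_cong m n (ctx m pi N rho q r X) (ctx m pi N rho q r Y)"
proof -
  have "cocom_cong (1 + r) (q + r) (syn_tensor 1 q X (syn_id r)) (syn_tensor 1 q Y (syn_id r))"
    by (rule cocom_cong.tens_l[OF assms(1) wf_id])
  hence "cocom_cong m (q + r) (syn_tensor 1 q X (syn_id r)) (syn_tensor 1 q Y (syn_id r))"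
    using assms(2) by simp
  hence "cocom_cong m (q + r) (syn_comp (syn_tensor 1 q X (syn_id r)) (perm m pi))
        (syn_comp (syn_tensor 1 q Y (syn_id r)) (perm m pi))"
    by (rule cocom_cong.comp_pre[OF _ assms(3)])
  thus ?thesis unfolding ctx_def by (rule cocom_cong.comp_post[OF _ assms(4)])
qed

lemma cc_conv:
  assumes "cocom_cong m n A B" "wf_syn m n A'" "wf_syn m n B'" "syn_iso n A A'" "syn_iso n B B'"
  shows "cocom_cong m n A' B'"
proof -
  have w: "wf_syn m n A" "wf_syn m n B" using cc_wf[OF assms(1)] by auto
  have "cocom_cong m n A' A"
    by (rule cocom_cong.sym[OF cocom_cong.iso[OF w(1) assms(2) assms(4)]])
  moreover have "cocom_cong m n B B'" by (rule cocom_cong.iso[OF w(2) assms(3) assms(5)])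
  ultimately show ?thesis using assms(1) by (blast intro: cocom_cong.trans)
qed

lemma cc_iso: "wf_syn m n A \<Longrightarrow> wf_syn m n B \<Longrightarrow> syn_iso n A B \<Longrightarrow> cocom_cong m n A B"
  by (rule cocom_cong.iso)

lemma cc_refl: "wf_syn m n A \<Longrightarrow> cocom_cong m n A A"
  by (rule cocom_cong.iso) (auto intro: iso_id)

lemma sw_lt: "a < m \<Longrightarrow> b < m \<Longrightarrow> j < m \<Longrightarrow> sw a b j < m"
  by (simp add: sw_def)

lemma wf_perm_sw: "a < m \<Longrightarrow> b < m \<Longrightarrow> wf_syn m m (perm m (sw a b))"
  by (rule wf_perm) (auto simp: inj_on_def sw_eq_iff sw_lt)

lemma swap_delta:
  "fst (syn_comp syn_swap syn_delta) = 1" "snd (syn_comp syn_swap syn_delta) (TV 0) = SIn 0"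
  "snd (syn_comp syn_swap syn_delta) (TOut j) = SV 0 (j = 0)"
  by (simp_all add: syn_swap_def syn_delta_def comp_TV)

lemma delta_simps:
  "fst syn_delta = 1" "snd syn_delta (TV 0) = SIn 0" "snd syn_delta (TOut j) = SV 0 (j \<noteq> 0)"
  by (simp_all add: syn_delta_def)

definition rho1 :: "nat \<Rightarrow> nat \<Rightarrow> nat \<Rightarrow> nat" where
  "rho1 m a j = (if j = a then 0 else if j = m then 1 else Suc (sw 0 a j))"

lemma inst_cocomm:
  assumes a: "a < m"
  shows "cocom_cong m (Suc m) (lay m a) (syn_comp (perm (Suc m) (sw a m)) (lay m a))"
proof -
  obtain r where r: "m = Suc r" using a by (cases m) auto
  have wr0: "wf_syn (Suc m) (Suc m) (perm (Suc m) (rho1 m a))"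
    by (rule wf_perm) (use a in \<open>auto simp: inj_on_def rho1_def sw_def split: if_splits\<close>)
  have e: "2 + r = Suc m" using r by simp
  have wr: "wf_syn (2 + r) (Suc m) (perm (Suc m) (rho1 m a))" using wr0 unfolding e .
  have c: "cocom_cong m (Suc m) (ctx m (sw 0 a) (Suc m) (rho1 m a) 2 r (syn_comp syn_swap syn_delta))
     (ctx m (sw 0 a) (Suc m) (rho1 m a) 2 r syn_delta)"
    by (rule cc_ctx[OF cocom_cong.cocomm r wf_perm_sw wr]) (use a in auto)
  have i1: "syn_iso (Suc m) (ctx m (sw 0 a) (Suc m) (rho1 m a) 2 r syn_delta) (lay m a)"
  proof (rule iso_id)
    show "fst (ctx m (sw 0 a) (Suc m) (rho1 m a) 2 r syn_delta) = fst (lay m a)" by (simp add: delta_simps)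
    fix t assume t: "t \<in> targets (Suc m) (fst (ctx m (sw 0 a) (Suc m) (rho1 m a) 2 r syn_delta))"
    show "snd (ctx m (sw 0 a) (Suc m) (rho1 m a) 2 r syn_delta) t = snd (lay m a) t"
      using t a by (cases t) (auto simp: ctx_TV ctx_TOut delta_simps rho1_def sw_def)
  qed
  have i2: "syn_iso (Suc m) (ctx m (sw 0 a) (Suc m) (rho1 m a) 2 r (syn_comp syn_swap syn_delta))
     (syn_comp (perm (Suc m) (sw a m)) (lay m a))"
  proof (rule iso_id)
    show "fst (ctx m (sw 0 a) (Suc m) (rho1 m a) 2 r (syn_comp syn_swap syn_delta)) =
        fst (syn_comp (perm (Suc m) (sw a m)) (lay m a))" by (simp add: swap_delta syn_swap_def delta_simps)
    fix t assume t: "t \<in> targets (Suc m) (fst (ctx m (sw 0 a) (Suc m) (rho1 m a) 2 r (syn_comp syn_swap syn_delta)))"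
    show "snd (ctx m (sw 0 a) (Suc m) (rho1 m a) 2 r (syn_comp syn_swap syn_delta)) t =
        snd (syn_comp (perm (Suc m) (sw a m)) (lay m a)) t"
      using t a by (cases t) (auto simp: ctx_TV ctx_TOut syn_swap_def syn_delta_def rho1_def sw_def comp_TV)
  qed
  have wl: "wf_syn m (Suc m) (lay m a)" by (rule wf_lay[OF a])
  have wl2: "wf_syn m (Suc m) (syn_comp (perm (Suc m) (sw a m)) (lay m a))"
    by (rule wf_comp[OF wl wf_perm_sw]) (use a in auto)
  show ?thesis by (rule cocom_cong.sym, rule cc_conv[OF c wl2 wl i2 i1])
qed

definition rho2 :: "nat \<Rightarrow> nat \<Rightarrow> nat \<Rightarrow> nat" where
  "rho2 m a j = (if j = a then 0 else if j = Suc m then 1 else if j = m then 2 else Suc (Suc (sw 0 a j)))"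

definition "cX = syn_comp (syn_tensor 1 2 syn_delta (syn_id 1)) syn_delta"
definition "cY = syn_comp (syn_tensor 1 1 (syn_id 1) syn_delta) syn_delta"

lemma cX_simps: "fst cX = 2" "snd cX (TV 0) = SIn 0" "snd cX (TV (Suc 0)) = SV 0 False"
  "snd cX (TOut j) = (if j = 0 then SV 1 False else if j = 1 then SV 1 True else SV 0 True)"
  by (simp_all add: cX_def comp_TV tens_TV tens_TOut syn_delta_def syn_id_def)

lemma cY_simps: "fst cY = 2" "snd cY (TV 0) = SIn 0" "snd cY (TV (Suc 0)) = SV 0 True"
  "snd cY (TOut j) = (if j = 0 then SV 0 False else if j = 1 then SV 1 False else SV 1 True)"
  by (simp_all add: cY_def comp_TV tens_TV tens_TOut syn_delta_def syn_id_def)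

lemma TV_lt2: "k < 2 \<longleftrightarrow> k = 0 \<or> k = (1::nat)" by auto

lemma inst_coassoc:
  assumes a: "a < m"
  shows "cocom_cong m (Suc (Suc m)) (syn_comp (lay (Suc m) a) (lay m a))
     (syn_comp (perm (Suc (Suc m)) (sw m (Suc m))) (syn_comp (lay (Suc m) m) (lay m a)))"
proof -
  obtain r where r: "m = Suc r" using a by (cases m) auto
  have wr0: "wf_syn (Suc (Suc m)) (Suc (Suc m)) (perm (Suc (Suc m)) (rho2 m a))"
    by (rule wf_perm) (use a in \<open>auto simp: inj_on_def rho2_def sw_def split: if_splits\<close>)
  have e: "3 + r = Suc (Suc m)" using r by simp
  have wr: "wf_syn (3 + r) (Suc (Suc m)) (perm (Suc (Suc m)) (rho2 m a))" using wr0 unfolding e .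
  have c: "cocom_cong m (Suc (Suc m)) (ctx m (sw 0 a) (Suc (Suc m)) (rho2 m a) 3 r cX)
     (ctx m (sw 0 a) (Suc (Suc m)) (rho2 m a) 3 r cY)"
    unfolding cX_def cY_def
    by (rule cc_ctx[OF cocom_cong.coassoc r wf_perm_sw wr]) (use a in auto)
  have i1: "syn_iso (Suc (Suc m)) (ctx m (sw 0 a) (Suc (Suc m)) (rho2 m a) 3 r cX)
      (syn_comp (lay (Suc m) a) (lay m a))"
  proof (rule iso_id)
    show "fst (ctx m (sw 0 a) (Suc (Suc m)) (rho2 m a) 3 r cX) = fst (syn_comp (lay (Suc m) a) (lay m a))"
      by (simp add: cX_simps)
    fix t assume t: "t \<in> targets (Suc (Suc m)) (fst (ctx m (sw 0 a) (Suc (Suc m)) (rho2 m a) 3 r cX))"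
    show "snd (ctx m (sw 0 a) (Suc (Suc m)) (rho2 m a) 3 r cX) t = snd (syn_comp (lay (Suc m) a) (lay m a)) t"
    proof (cases t)
      case (TV k)
      hence "k = 0 \<or> k = 1" using t by (auto simp: cX_simps)
      thus ?thesis using TV a by (auto simp: ctx_TV cX_simps comp_TV sw_def)
    next
      case (TOut j)
      thus ?thesis using t a by (auto simp: ctx_TOut cX_simps rho2_def sw_def)
    qed
  qed
  have i2: "syn_iso (Suc (Suc m)) (ctx m (sw 0 a) (Suc (Suc m)) (rho2 m a) 3 r cY)
      (syn_comp (perm (Suc (Suc m)) (sw m (Suc m))) (syn_comp (lay (Suc m) m) (lay m a)))"
  proof (rule iso_id)
    show "fst (ctx m (sw 0 a) (Suc (Suc m)) (rho2 m a) 3 r cY) =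
        fst (syn_comp (perm (Suc (Suc m)) (sw m (Suc m))) (syn_comp (lay (Suc m) m) (lay m a)))"
      by (simp add: cY_simps)
    fix t assume t: "t \<in> targets (Suc (Suc m)) (fst (ctx m (sw 0 a) (Suc (Suc m)) (rho2 m a) 3 r cY))"
    show "snd (ctx m (sw 0 a) (Suc (Suc m)) (rho2 m a) 3 r cY) t =
        snd (syn_comp (perm (Suc (Suc m)) (sw m (Suc m))) (syn_comp (lay (Suc m) m) (lay m a))) t"
    proof (cases t)
      case (TV k)
      hence "k = 0 \<or> k = 1" using t by (auto simp: cY_simps)
      thus ?thesis using TV a by (auto simp: ctx_TV cY_simps comp_TV sw_def)
    next
      case (TOut j)
      thus ?thesis using t a by (auto simp: ctx_TOut cY_simps rho2_def sw_def)
    qed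
  qed
  have wl: "wf_syn m (Suc (Suc m)) (syn_comp (lay (Suc m) a) (lay m a))"
    by (rule wf_comp[OF wf_lay[OF a] wf_lay]) (use a in simp)
  have wl2: "wf_syn m (Suc (Suc m)) (syn_comp (perm (Suc (Suc m)) (sw m (Suc m))) (syn_comp (lay (Suc m) m) (lay m a)))"
    by (rule wf_comp[OF wf_comp[OF wf_lay[OF a] wf_lay] wf_perm_sw]) auto
  show ?thesis by (rule cc_conv[OF c wl wl2 i1 i2])
qed

lemma inst_comm:
  assumes a: "a < m" and b: "b < m" and ab: "a \<noteq> b"
  shows "syn_iso (Suc (Suc m)) (syn_comp (lay (Suc m) b) (lay m a))
     (syn_comp (perm (Suc (Suc m)) (sw m (Suc m))) (syn_comp (lay (Suc m) a) (lay m b)))"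
  unfolding syn_iso_def
proof (intro conjI exI[of _ "sw 0 1"] ballI)
  show "fst (syn_comp (lay (Suc m) b) (lay m a)) =
    fst (syn_comp (perm (Suc (Suc m)) (sw m (Suc m))) (syn_comp (lay (Suc m) a) (lay m b)))" by simp
  show "bij_betw (sw 0 1) {..<fst (syn_comp (lay (Suc m) b) (lay m a))}
     {..<fst (syn_comp (perm (Suc (Suc m)) (sw m (Suc m))) (syn_comp (lay (Suc m) a) (lay m b)))}"
    unfolding bij_betw_def inj_on_def by (auto simp: sw_def)
  fix t assume t: "t \<in> targets (Suc (Suc m)) (fst (syn_comp (lay (Suc m) b) (lay m a)))"
  show "ren_src (sw 0 1) (snd (syn_comp (lay (Suc m) b) (lay m a)) t) =
     snd (syn_comp (perm (Suc (Suc m)) (sw m (Suc m))) (syn_comp (lay (Suc m) a) (lay m b))) (ren_tgt (sw 0 1) t)"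
  proof (cases t)
    case (TV k)
    hence "k = 0 \<or> k = 1" using t by auto
    thus ?thesis using TV a b ab by (auto simp: comp_TV sw_def)
  next
    case (TOut j)
    thus ?thesis using t a b ab by (auto simp: sw_def)
  qed
qed

lemma surj_card: fixes f :: "nat \<Rightarrow> nat" and n m :: nat assumes "\<And>i. i < m \<Longrightarrow> \<exists>j<n. f j = i" shows "m \<le> n"
proof -
  have "{..<m} \<subseteq> f ` {..<n}" using assms by force
  hence "card {..<m} \<le> card (f ` {..<n})" by (intro card_mono) (auto intro: finite_imageI)
  also have "\<dots> \<le> n" using card_image_le[of "{..<n}" f] by simp
  finally show ?thesis by simp
qed

lemma exists_graph2:
  assumes "\<And>j. j < n \<Longrightarrow> f j < m" "\<And>i. i < m \<Longrightarrow> \<exists>j<n. f j = i"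
  shows "\<exists>G. wf_syn m n G \<and> (\<forall>j<n. aroot G j = f j)"
  using exists_graph[OF assms surj_card[OF assms(2)]] .

lemma surj_aroot:
  "\<forall>m n G. wf_syn m n G \<longrightarrow> fst G = v \<longrightarrow> (\<forall>i<m. \<exists>j<n. aroot G j = i)"
proof (induction v)
  case 0
  show ?case
  proof (intro allI impI)
    fix m n G i assume G: "wf_syn m n G" "fst G = 0" and i: "i < m"
    obtain t where t: "t \<in> targets n (fst G)" "snd G t = SIn i" using wf_surj[OF G(1), of "SIn i"] i by auto
    then obtain j where j: "t = TOut j" "j < n" using G(2) by (cases t) auto
    thus "\<exists>j<n. aroot G j = i" using t by (auto intro!: exI[of _ j] aroot_eq)
  qed
next
  case (Suc v)
  show ?case
  proof (intro allI impI)
    fix m n G i assume G: "wf_syn m n G" "fst G = Suc v" and i: "i < m"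
    obtain a G' where a: "a < m" "wf_syn (Suc m) n G'" "syn_iso n G (syn_comp G' (lay m a))"
      using peel[OF G] by blast
    have "fst G' = v" using wf_card[OF G(1)] wf_card[OF a(2)] G(2) by simp
    moreover have "i < Suc m" using i by simp
    ultimately obtain j where j: "j < n" "aroot G' j = i" using Suc.IH a(2) by blast
    have "aroot G j = aroot (syn_comp G' (lay m a)) j" using aroot_iso[OF G(1) a(3) j(1)] by simp
    also have "\<dots> = i" using aroot_comp[OF wf_lay[OF a(1)] a(2) j(1)] aroot_lay[OF a(1)] j i by simp
    finally show "\<exists>j<n. aroot G j = i" using j by blast
  qed
qed

lemma surjA: "wf_syn m n G \<Longrightarrow> i < m \<Longrightarrow> \<exists>j<n. aroot G j = i"
  using surj_aroot by blast

abbreviation "IHv v \<equiv> (\<forall>m n G H. wf_syn m n G \<longrightarrow> wf_syn m n H \<longrightarrow> n = m + v \<longrightarrow>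
        (\<forall>j<n. aroot G j = aroot H j) \<longrightarrow> cocom_cong m n G H)"

lemma aroot_lay_comp:
  assumes "a < m" "wf_syn (Suc m) n K" "j < n"
  shows "aroot (syn_comp K (lay m a)) j = (if aroot K j = m then a else aroot K j)"
  using aroot_comp[OF wf_lay[OF assms(1)] assms(2,3)] aroot_lay[OF assms(1) aroot_rt(2)[OF assms(2,3)]] by simp

lemma wf_lay_comp: "a < m \<Longrightarrow> wf_syn (Suc m) n K \<Longrightarrow> wf_syn m n (syn_comp K (lay m a))"
  by (rule wf_comp[OF wf_lay])

lemma case_neq:
  assumes IH: "IHv v" and wG: "wf_syn (Suc m) n G'" and wH: "wf_syn (Suc m) n H'"
    and a: "a < m" and b: "b < m" and ab: "a \<noteq> b" and nv: "n = m + Suc v"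
    and eq: "\<forall>j<n. (if aroot G' j = m then a else aroot G' j) = (if aroot H' j = m then b else aroot H' j)"
  shows "cocom_cong m n (syn_comp G' (lay m a)) (syn_comp H' (lay m b))"
proof -
  define g where "g = aroot G'"
  define h where "h = aroot H'"
  have gl: "j < n \<Longrightarrow> g j < Suc m" for j using aroot_rt(2)[OF wG] by (simp add: g_def)
  have hl: "j < n \<Longrightarrow> h j < Suc m" for j using aroot_rt(2)[OF wH] by (simp add: h_def)
  have eq': "j < n \<Longrightarrow> (if g j = m then a else g j) = (if h j = m then b else h j)" for j
    using eq by (simp only: g_def h_def)
  define k where "k j = (if g j = m then m else if h j = m then Suc m else g j)" for j
  have kG: "\<exists>K. wf_syn (Suc (Suc m)) n K \<and> (\<forall>j<n. aroot K j = k j)"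
  proof (rule exists_graph2)
    show "k j < Suc (Suc m)" if "j < n" for j using gl[OF that] by (simp add: k_def)
    show "\<exists>j<n. k j = i" if i: "i < Suc (Suc m)" for i
    proof -
      consider "i = m" | "i = Suc m" | "i = a" | "i < m" "i \<noteq> a" using i by linarith
      thus ?thesis
      proof cases
        case 1
        obtain j where "j < n" "g j = m" using surjA[OF wG, of m] by (auto simp: g_def)
        thus ?thesis using 1 by (auto simp: k_def)
      next
        case 2
        obtain j where j: "j < n" "h j = m" using surjA[OF wH, of m] by (auto simp: h_def)
        hence "g j \<noteq> m" using eq'[OF j(1)] ab by auto
        thus ?thesis using 2 j by (auto simp: k_def)
      next
        case 3
        obtain j where j: "j < n" "g j = a" using surjA[OF wG, of a] a by (auto simp: g_def)
        hence "h j \<noteq> m" using eq'[OF j(1)] ab a by auto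
        thus ?thesis using 3 j a by (auto simp: k_def)
      next
        case 4
        obtain j where j: "j < n" "h j = i" using surjA[OF wH, of i] 4 by (auto simp: h_def)
        hence "g j \<noteq> m" using eq'[OF j(1)] 4 by auto
        hence "g j = i" using eq'[OF j(1)] j 4 by auto
        have "k j = i" using 4 j \<open>g j = i\<close> by (simp add: k_def)
        thus ?thesis using j by blast
      qed
    qed
  qed
  then obtain K where K: "wf_syn (Suc (Suc m)) n K" "\<And>j. j < n \<Longrightarrow> aroot K j = k j" by blast
  have kl: "j < n \<Longrightarrow> k j < Suc (Suc m)" for j using aroot_rt(2)[OF K(1)] K(2) by metis
  let ?s = "perm (Suc (Suc m)) (sw m (Suc m))"
  have ws: "wf_syn (Suc (Suc m)) (Suc (Suc m)) ?s" by (rule wf_perm_sw) auto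
  have b1: "b < Suc m" and a1: "a < Suc m" using a b by auto
  have w1: "wf_syn (Suc m) n (syn_comp K (lay (Suc m) b))" by (rule wf_lay_comp[OF b1 K(1)])
  have c1: "cocom_cong (Suc m) n G' (syn_comp K (lay (Suc m) b))"
  proof (rule IH[rule_format, OF wG w1])
    show "n = Suc m + v" using nv by simp
    show "aroot G' j = aroot (syn_comp K (lay (Suc m) b)) j" if j: "j < n" for j
        using aroot_lay_comp[OF b1 K(1) j] K(2)[OF j] eq'[OF j] gl[OF j] ab
        by (auto simp: k_def g_def)
  qed
  have wKs: "wf_syn (Suc (Suc m)) n (syn_comp K ?s)" by (rule wf_comp[OF ws K(1)])
  have w2: "wf_syn (Suc m) n (syn_comp (syn_comp K ?s) (lay (Suc m) a))" by (rule wf_lay_comp[OF a1 wKs])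
  have c2: "cocom_cong (Suc m) n H' (syn_comp (syn_comp K ?s) (lay (Suc m) a))"
  proof (rule IH[rule_format, OF wH w2])
    show "n = Suc m + v" using nv by simp
    show "aroot H' j = aroot (syn_comp (syn_comp K ?s) (lay (Suc m) a)) j" if j: "j < n" for j
    proof -
      have "aroot (syn_comp K ?s) j = sw m (Suc m) (k j)"
        using aroot_comp[OF ws K(1) j] K(2)[OF j] by simp
      thus ?thesis
        using aroot_lay_comp[OF a1 wKs j] eq'[OF j] gl[OF j] hl[OF j] ab a b
        by (auto simp: k_def g_def h_def sw_def)
    qed
  qed
  have L1: "wf_syn m (Suc (Suc m)) (syn_comp (lay (Suc m) b) (lay m a))"
    by (rule wf_comp[OF wf_lay[OF a] wf_lay[OF b1]])
  have L2: "wf_syn m (Suc (Suc m)) (syn_comp ?s (syn_comp (lay (Suc m) a) (lay m b)))"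
    by (rule wf_comp[OF wf_comp[OF wf_lay[OF b] wf_lay[OF a1]] ws])
  have c3: "cocom_cong m n (syn_comp K (syn_comp (lay (Suc m) b) (lay m a)))
      (syn_comp K (syn_comp ?s (syn_comp (lay (Suc m) a) (lay m b))))"
    by (rule cocom_cong.comp_post[OF cc_iso[OF L1 L2 inst_comm[OF a b ab]] K(1)])
  have c1': "cocom_cong m n (syn_comp G' (lay m a)) (syn_comp K (syn_comp (lay (Suc m) b) (lay m a)))"
    using cocom_cong.comp_pre[OF c1 wf_lay[OF a]] by (simp add: comp_assoc)
  have c2': "cocom_cong m n (syn_comp H' (lay m b)) (syn_comp K (syn_comp ?s (syn_comp (lay (Suc m) a) (lay m b))))"
    using cocom_cong.comp_pre[OF c2 wf_lay[OF b]] by (simp add: comp_assoc)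
  show ?thesis using c1' c3 c2' by (meson cocom_cong.sym cocom_cong.trans)
qed

lemma case_eq:
  assumes IH: "IHv v" and wG: "wf_syn (Suc m) n G'" and wH: "wf_syn (Suc m) n H'"
    and a: "a < m" and nv: "n = m + Suc v"
    and eq: "\<forall>j<n. (if aroot G' j = m then a else aroot G' j) = (if aroot H' j = m then a else aroot H' j)"
  shows "cocom_cong m n (syn_comp G' (lay m a)) (syn_comp H' (lay m a))"
proof -
  define f where "f j = (if aroot G' j = m then a else aroot G' j)" for j
  have fl: "j < n \<Longrightarrow> f j < m" for j using aroot_rt(2)[OF wG, of j] a by (auto simp: f_def)
  have fH: "j < n \<Longrightarrow> f j = (if aroot H' j = m then a else aroot H' j)" for j using eq by (simp add: f_def)
  define C where "C = {j. j < n \<and> f j = a}"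
  define gP where "gP P j = (if j \<in> P then a else if f j = a then m else f j)" for P j
  define valid where "valid P \<longleftrightarrow> P \<subseteq> C \<and> P \<noteq> {} \<and> P \<noteq> C" for P
  define R where "R P Q \<longleftrightarrow> (\<forall>K1 K2. wf_syn (Suc m) n K1 \<longrightarrow> wf_syn (Suc m) n K2 \<longrightarrow>
     (\<forall>j<n. aroot K1 j = gP P j) \<longrightarrow> (\<forall>j<n. aroot K2 j = gP Q j) \<longrightarrow>
     cocom_cong m n (syn_comp K1 (lay m a)) (syn_comp K2 (lay m a)))" for P Q
  have a1: "a < Suc m" using a by simp
  have nv': "n = Suc m + v" using nv by simp
  have fsurj: "\<exists>j<n. f j = i" if i: "i < m" for i
  proof -
    have "i < Suc m" using i by simp
    then obtain j where "j < n" "aroot G' j = i" using surjA[OF wG, of i] by blast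
    thus ?thesis using i by (auto simp: f_def)
  qed
  have ex: "\<exists>K. wf_syn (Suc m) n K \<and> (\<forall>j<n. aroot K j = gP P j)" if v: "valid P" for P
  proof (rule exists_graph2)
    show "gP P j < Suc m" if "j < n" for j using fl[OF that] a by (simp add: gP_def)
    show "\<exists>j<n. gP P j = i" if i: "i < Suc m" for i
    proof -
      consider "i = m" | "i = a" | "i < m" "i \<noteq> a" using i by linarith
      thus ?thesis
      proof cases
        case 1
        obtain j where "j \<in> C" "j \<notin> P" using v unfolding valid_def by blast
        thus ?thesis using 1 by (auto simp: gP_def C_def)
      next
        case 2
        obtain j where "j \<in> P" using v unfolding valid_def by blast
        thus ?thesis using 2 v by (auto simp: gP_def C_def valid_def)
      next
        case 3
        obtain j where j: "j < n" "f j = i" using fsurj 3 by blast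
        hence "j \<notin> P" using v 3 by (auto simp: valid_def C_def)
        thus ?thesis using j 3 by (auto simp: gP_def)
      qed
    qed
  qed
  have R0: "R P P" for P
    unfolding R_def
  proof (intro allI impI)
    fix K1 K2 assume w: "wf_syn (Suc m) n K1" "wf_syn (Suc m) n K2"
      and e: "\<forall>j<n. aroot K1 j = gP P j" "\<forall>j<n. aroot K2 j = gP P j"
    have "cocom_cong (Suc m) n K1 K2" using IH[rule_format, OF w nv'] e by simp
    thus "cocom_cong m n (syn_comp K1 (lay m a)) (syn_comp K2 (lay m a))"
      by (rule cocom_cong.comp_pre[OF _ wf_lay[OF a]])
  qed
  have Rsym: "R P Q \<Longrightarrow> R Q P" for P Q
    unfolding R_def by (meson cocom_cong.sym)
  have Rtrans: "R P Q \<Longrightarrow> R Q S \<Longrightarrow> valid Q \<Longrightarrow> R P S" for P Q S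
  proof -
    assume r: "R P Q" "R Q S" "valid Q"
    obtain K where K: "wf_syn (Suc m) n K" "\<forall>j<n. aroot K j = gP Q j" using ex[OF r(3)] by blast
    show "R P S" unfolding R_def
    proof (intro allI impI)
      fix K1 K2 assume w: "wf_syn (Suc m) n K1" "wf_syn (Suc m) n K2"
        and e: "\<forall>j<n. aroot K1 j = gP P j" "\<forall>j<n. aroot K2 j = gP S j"
      have "cocom_cong m n (syn_comp K1 (lay m a)) (syn_comp K (lay m a))"
        using r(1) w K e unfolding R_def by blast
      moreover have "cocom_cong m n (syn_comp K (lay m a)) (syn_comp K2 (lay m a))"
        using r(2) w K e unfolding R_def by blast
      ultimately show "cocom_cong m n (syn_comp K1 (lay m a)) (syn_comp K2 (lay m a))"
        by (rule cocom_cong.trans)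
    qed
  qed
  have M1: "R P (C - P)" if v: "valid P" for P
    unfolding R_def
  proof (intro allI impI)
    fix K1 K2 assume w: "wf_syn (Suc m) n K1" "wf_syn (Suc m) n K2"
      and e: "\<forall>j<n. aroot K1 j = gP P j" "\<forall>j<n. aroot K2 j = gP (C - P) j"
    let ?t = "perm (Suc m) (sw a m)"
    have wt: "wf_syn (Suc m) (Suc m) ?t" by (rule wf_perm_sw) (use a in auto)
    have wKt: "wf_syn (Suc m) n (syn_comp K1 ?t)" by (rule wf_comp[OF wt w(1)])
    have "cocom_cong (Suc m) n (syn_comp K1 ?t) K2"
    proof (rule IH[rule_format, OF wKt w(2) nv'])
      show "aroot (syn_comp K1 ?t) j = aroot K2 j" if j: "j < n" for j
        using aroot_comp[OF wt w(1) j] e j fl[OF j] v a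
        by (auto simp: gP_def sw_def C_def valid_def)
    qed
    hence c: "cocom_cong m n (syn_comp (syn_comp K1 ?t) (lay m a)) (syn_comp K2 (lay m a))"
      by (rule cocom_cong.comp_pre[OF _ wf_lay[OF a]])
    have "cocom_cong m n (syn_comp K1 (lay m a)) (syn_comp K1 (syn_comp ?t (lay m a)))"
      by (rule cocom_cong.comp_post[OF inst_cocomm[OF a] w(1)])
    thus "cocom_cong m n (syn_comp K1 (lay m a)) (syn_comp K2 (lay m a))"
      using c by (simp add: comp_assoc) (rule cocom_cong.trans)
  qed
  have M2: "R P Q" if P: "P \<noteq> {}" "P \<subset> Q" and Q: "Q \<subset> C" for P Q
  proof -
    define k where "k j = (if j \<in> P then a else if j \<in> Q then Suc m else if f j = a then m else f j)" for j
    have "\<exists>K. wf_syn (Suc (Suc m)) n K \<and> (\<forall>j<n. aroot K j = k j)"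
    proof (rule exists_graph2)
      show "k j < Suc (Suc m)" if "j < n" for j using fl[OF that] a by (simp add: k_def)
      show "\<exists>j<n. k j = i" if i: "i < Suc (Suc m)" for i
      proof -
        consider "i = Suc m" | "i = m" | "i = a" | "i < m" "i \<noteq> a" using i by linarith
        thus ?thesis
        proof cases
          case 1
          obtain j where "j \<in> Q" "j \<notin> P" using P by blast
          thus ?thesis using 1 Q by (auto simp: k_def C_def)
        next
          case 2
          obtain j where "j \<in> C" "j \<notin> Q" using Q by blast
          thus ?thesis using 2 P by (auto simp: k_def C_def)
        next
          case 3
          obtain j where "j \<in> P" using P by blast
          thus ?thesis using 3 P Q by (auto simp: k_def C_def)
        next
          case 4
          obtain j where j: "j < n" "f j = i" using fsurj 4 by blast
          hence "j \<notin> Q" "j \<notin> P" using P Q 4 by (auto simp: C_def)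
          thus ?thesis using j 4 by (auto simp: k_def)
        qed
      qed
    qed
    then obtain K where K: "wf_syn (Suc (Suc m)) n K" "\<And>j. j < n \<Longrightarrow> aroot K j = k j" by blast
    let ?s = "perm (Suc (Suc m)) (sw m (Suc m))"
    have ws: "wf_syn (Suc (Suc m)) (Suc (Suc m)) ?s" by (rule wf_perm_sw) auto
    have wKs: "wf_syn (Suc (Suc m)) n (syn_comp K ?s)" by (rule wf_comp[OF ws K(1)])
    have mSm: "m < Suc m" by simp
    define KP where "KP = syn_comp (syn_comp K ?s) (lay (Suc m) m)"
    define KQ where "KQ = syn_comp K (lay (Suc m) a)"
    have wKP: "wf_syn (Suc m) n KP" unfolding KP_def by (rule wf_lay_comp[OF mSm wKs])
    have wKQ: "wf_syn (Suc m) n KQ" unfolding KQ_def by (rule wf_lay_comp[OF a1 K(1)])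
    have aKP: "aroot KP j = gP P j" if j: "j < n" for j
    proof -
      have "aroot (syn_comp K ?s) j = sw m (Suc m) (k j)"
        using aroot_comp[OF ws K(1) j] K(2)[OF j] by simp
      thus ?thesis using aroot_lay_comp[OF mSm wKs j] j fl[OF j] a P Q
        unfolding KP_def by (auto simp: k_def gP_def sw_def C_def)
    qed
    have aKQ: "aroot KQ j = gP Q j" if j: "j < n" for j
      using aroot_lay_comp[OF a1 K(1) j] K(2)[OF j] j fl[OF j] a P Q
      unfolding KQ_def by (auto simp: k_def gP_def C_def)
    have cc: "cocom_cong m n (syn_comp KP (lay m a)) (syn_comp KQ (lay m a))"
    proof -
      have "cocom_cong m n (syn_comp K (syn_comp (lay (Suc m) a) (lay m a)))
         (syn_comp K (syn_comp ?s (syn_comp (lay (Suc m) m) (lay m a))))"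
        by (rule cocom_cong.comp_post[OF inst_coassoc[OF a] K(1)])
      thus ?thesis unfolding KP_def KQ_def by (simp add: comp_assoc) (rule cocom_cong.sym)
    qed
    show "R P Q" unfolding R_def
    proof (intro allI impI)
      fix K1 K2 assume w: "wf_syn (Suc m) n K1" "wf_syn (Suc m) n K2"
        and e: "\<forall>j<n. aroot K1 j = gP P j" "\<forall>j<n. aroot K2 j = gP Q j"
      have "cocom_cong m n (syn_comp K1 (lay m a)) (syn_comp KP (lay m a))"
        using R0[of P] w(1) wKP e(1) aKP unfolding R_def by blast
      moreover have "cocom_cong m n (syn_comp KQ (lay m a)) (syn_comp K2 (lay m a))"
        using R0[of Q] w(2) wKQ e(2) aKQ unfolding R_def by blast
      ultimately show "cocom_cong m n (syn_comp K1 (lay m a)) (syn_comp K2 (lay m a))"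
        using cc by (meson cocom_cong.trans)
    qed
  qed
  have single: "R {x} P" if v: "valid P" and x: "x \<in> P" for x P
  proof (cases "P = {x}")
    case True thus ?thesis using R0 by simp
  next
    case False
    thus ?thesis using M2[of "{x}" P] v x unfolding valid_def by blast
  qed
  have conn: "R P Q" if vP: "valid P" and vQ: "valid Q" for P Q
  proof -
    obtain x where x: "x \<in> P" using vP unfolding valid_def by blast
    obtain y where y: "y \<in> Q" using vQ unfolding valid_def by blast
    have vx: "valid {x}" using vP x unfolding valid_def by blast
    have vy: "valid {y}" using vQ y unfolding valid_def by blast
    have "R {x} {y}"
    proof (cases "x = y")
      case True thus ?thesis using R0 by simp
    next
      case False
      show ?thesis
      proof (cases "C = {x, y}")
        case True
        hence "C - {x} = {y}" using False by auto
        thus ?thesis using M1[OF vx] by simp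
      next
        case nC: False
        have xyC: "{x, y} \<subset> C" using nC vx vy unfolding valid_def by blast
        have vxy: "valid {x, y}" using xyC unfolding valid_def by blast
        have "R {x} {x, y}" using M2[of "{x}" "{x, y}"] xyC False by blast
        moreover have "R {y} {x, y}" using M2[of "{y}" "{x, y}"] xyC False by blast
        ultimately show ?thesis using Rtrans Rsym vxy by blast
      qed
    qed
    hence "R P {y}" using Rtrans Rsym single[OF vP x] vx by blast
    thus ?thesis using Rtrans single[OF vQ y] vy by blast
  qed
  define A1 where "A1 = {j. j < n \<and> aroot G' j = a}"
  define A2 where "A2 = {j. j < n \<and> aroot H' j = a}"
  have vA1: "valid A1"
  proof -
    have "A1 \<subseteq> C" by (auto simp: A1_def C_def f_def)
    moreover obtain j where "j < n" "aroot G' j = a" using surjA[OF wG a1] by blast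
    hence "A1 \<noteq> {}" by (auto simp: A1_def)
    moreover obtain j' where "j' < n" "aroot G' j' = m" using surjA[OF wG, of m] by auto
    hence "j' \<in> C" "j' \<notin> A1" using a by (auto simp: A1_def C_def f_def)
    ultimately show ?thesis unfolding valid_def by blast
  qed
  have vA2: "valid A2"
  proof -
    have "A2 \<subseteq> C" by (auto simp: A2_def C_def fH)
    moreover obtain j where "j < n" "aroot H' j = a" using surjA[OF wH a1] by blast
    hence "A2 \<noteq> {}" by (auto simp: A2_def)
    moreover obtain j' where "j' < n" "aroot H' j' = m" using surjA[OF wH, of m] by auto
    hence "j' \<in> C" "j' \<notin> A2" using a by (auto simp: A2_def C_def fH)
    ultimately show ?thesis unfolding valid_def by blast
  qed
  have gG: "\<forall>j<n. aroot G' j = gP A1 j"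
    using aroot_rt(2)[OF wG] a by (auto simp: gP_def A1_def f_def)
  have gH: "\<forall>j<n. aroot H' j = gP A2 j"
    using aroot_rt(2)[OF wH] a by (auto simp: gP_def A2_def fH)
  show ?thesis using conn[OF vA1 vA2] wG wH gG gH unfolding R_def by blast
qed

lemma completeness: "IHv v"
proof (induction v)
  case 0
  show ?case
  proof (intro allI impI)
    fix m n G H assume G: "wf_syn m n G" and H: "wf_syn m n H" and nv: "n = m + 0"
      and e: "\<forall>j<n. aroot G j = aroot H j"
    have f0: "fst G = 0" "fst H = 0" using wf_card[OF G] wf_card[OF H] nv by auto
    have "syn_iso n G H"
    proof (rule iso_id)
      show "fst G = fst H" using f0 by simp
      fix t assume t: "t \<in> targets n (fst G)"
      then obtain j where j: "t = TOut j" "j < n" using f0 by (cases t) auto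
      have sG: "snd G (TOut j) \<in> sources m 0" using wf_into[OF G, of "TOut j"] j f0 by simp
      have sH: "snd H (TOut j) \<in> sources m 0" using wf_into[OF H, of "TOut j"] j f0 by simp
      obtain i where i: "snd G (TOut j) = SIn i" using sG by (cases "snd G (TOut j)") auto
      obtain i' where i': "snd H (TOut j) = SIn i'" using sH by (cases "snd H (TOut j)") auto
      have "aroot G j = i" "aroot H j = i'" using i i' by (auto intro: aroot_eq)
      thus "snd G t = snd H t" using e j i i' by simp
    qed
    thus "cocom_cong m n G H" by (rule cc_iso[OF G H])
  qed
next
  case (Suc v)
  show ?case
  proof (intro allI impI)
    fix m n G H assume G: "wf_syn m n G" and H: "wf_syn m n H" and nv: "n = m + Suc v"
      and e: "\<forall>j<n. aroot G j = aroot H j"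
    have fG: "fst G = Suc v" "fst H = Suc v" using wf_card[OF G] wf_card[OF H] nv by auto
    obtain a G' where a: "a < m" "wf_syn (Suc m) n G'" "syn_iso n G (syn_comp G' (lay m a))"
      using peel[OF G fG(1)] by blast
    obtain b H' where b: "b < m" "wf_syn (Suc m) n H'" "syn_iso n H (syn_comp H' (lay m b))"
      using peel[OF H fG(2)] by blast
    have wa: "wf_syn m n (syn_comp G' (lay m a))" by (rule wf_lay_comp[OF a(1) a(2)])
    have wb: "wf_syn m n (syn_comp H' (lay m b))" by (rule wf_lay_comp[OF b(1) b(2)])
    have cG: "cocom_cong m n G (syn_comp G' (lay m a))" by (rule cc_iso[OF G wa a(3)])
    have cH: "cocom_cong m n H (syn_comp H' (lay m b))" by (rule cc_iso[OF H wb b(3)])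
    have eq: "\<forall>j<n. (if aroot G' j = m then a else aroot G' j) = (if aroot H' j = m then b else aroot H' j)"
    proof (intro allI impI)
      fix j assume j: "j < n"
      have "aroot G j = aroot (syn_comp G' (lay m a)) j" using aroot_iso[OF G a(3) j] by simp
      moreover have "aroot H j = aroot (syn_comp H' (lay m b)) j" using aroot_iso[OF H b(3) j] by simp
      ultimately show "(if aroot G' j = m then a else aroot G' j) = (if aroot H' j = m then b else aroot H' j)"
        using e j aroot_lay_comp[OF a(1) a(2) j] aroot_lay_comp[OF b(1) b(2) j] by simp
    qed
    have "cocom_cong m n (syn_comp G' (lay m a)) (syn_comp H' (lay m b))"
    proof (cases "a = b")
      case True
      thus ?thesis using case_eq[OF Suc.IH a(2) b(2) a(1) nv] eq by simp
    next
      case False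
      thus ?thesis using case_neq[OF Suc.IH a(2) b(2) a(1) b(1) False nv eq] by simp
    qed
    thus "cocom_cong m n G H" using cG cH by (meson cocom_cong.sym cocom_cong.trans)
  qed
qed

lemma part1:
  assumes G: "wf_syn m n G"
  shows "ancestry m n G \<in> fincorel_circ m n"
proof -
  have rb: "x \<in> bnd m n \<Longrightarrow> rootb G x < m" for x
    using aroot_rt(2)[OF G] by (auto simp: bnd_def)
  have eqv: "equiv (bnd m n) (ancestry m n G)"
    unfolding ancestry_char[OF G] equiv_def refl_on_def sym_def trans_def by auto
  have u: "\<exists>!i. i < m \<and> (x, Inl i) \<in> ancestry m n G" if x: "x \<in> bnd m n" for x
  proof (rule ex1I[of _ "rootb G x"])
    show "rootb G x < m \<and> (x, Inl (rootb G x)) \<in> ancestry m n G"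
      using rb[OF x] x by (auto simp: ancestry_char[OF G] bnd_def)
    show "i = rootb G x" if "i < m \<and> (x, Inl i) \<in> ancestry m n G" for i
      using that by (auto simp: ancestry_char[OF G])
  qed
  have s: "\<exists>j<n. (x, Inr j) \<in> ancestry m n G" if x: "x \<in> bnd m n" for x
  proof -
    obtain j where "j < n" "aroot G j = rootb G x" using surjA[OF G rb[OF x]] by blast
    thus ?thesis using x by (auto simp: ancestry_char[OF G] bnd_def)
  qed
  show ?thesis using eqv u s by (simp add: fincorel_circ_def fincorel_def)
qed

lemma part2:
  assumes R: "R \<in> fincorel_circ m n"
  shows "\<exists>G. wf_syn m n G \<and> ancestry m n G = R"
proof -
  have eqv: "equiv (bnd m n) R" using R by (simp add: fincorel_circ_def fincorel_def)
  have uq: "\<And>x. x \<in> bnd m n \<Longrightarrow> \<exists>!i. i < m \<and> (x, Inl i) \<in> R"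
    and ex: "\<And>x. x \<in> bnd m n \<Longrightarrow> \<exists>j<n. (x, Inr j) \<in> R"
    using R by (auto simp: fincorel_circ_def)
  have sub: "R \<subseteq> bnd m n \<times> bnd m n" using eqv by (simp add: equiv_def refl_on_def)
  have symR: "(x, y) \<in> R \<Longrightarrow> (y, x) \<in> R" for x y using eqv by (auto simp: equiv_def sym_def)
  have transR: "(x, y) \<in> R \<Longrightarrow> (y, z) \<in> R \<Longrightarrow> (x, z) \<in> R" for x y z
    using eqv by (auto simp: equiv_def trans_def)
  have reflR: "x \<in> bnd m n \<Longrightarrow> (x, x) \<in> R" for x using eqv by (auto simp: equiv_def refl_on_def)
  define rf where "rf x = (THE i. i < m \<and> (x, Inl i) \<in> R)" for x
  have rf: "x \<in> bnd m n \<Longrightarrow> rf x < m \<and> (x, Inl (rf x)) \<in> R" for x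
    using theI'[OF uq] by (simp add: rf_def)
  have rf_eq: "x \<in> bnd m n \<Longrightarrow> i < m \<Longrightarrow> (x, Inl i) \<in> R \<Longrightarrow> rf x = i" for x i
    using uq by (metis rf)
  have bl: "i < m \<Longrightarrow> Inl i \<in> bnd m n" for i by (simp add: bnd_def)
  have br: "j < n \<Longrightarrow> Inr j \<in> bnd m n" for j by (simp add: bnd_def)
  define f where "f j = rf (Inr j)" for j
  have "\<exists>G. wf_syn m n G \<and> (\<forall>j<n. aroot G j = f j)"
  proof (rule exists_graph2)
    show "f j < m" if "j < n" for j using rf[OF br[OF that]] by (simp add: f_def)
    show "\<exists>j<n. f j = i" if i: "i < m" for i
    proof -
      obtain j where j: "j < n" "(Inl i, Inr j) \<in> R" using ex[OF bl[OF i]] by blast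
      have "f j = i" unfolding f_def by (rule rf_eq[OF br[OF j(1)] i symR[OF j(2)]])
      thus ?thesis using j by blast
    qed
  qed
  then obtain G where G: "wf_syn m n G" "\<forall>j<n. aroot G j = f j" by blast
  have rbG: "x \<in> bnd m n \<Longrightarrow> rootb G x = rf x" for x
  proof -
    assume x: "x \<in> bnd m n"
    then consider (l) i where "x = Inl i" "i < m" | (r) j where "x = Inr j" "j < n" by (auto simp: bnd_def)
    thus ?thesis
    proof cases
      case l thus ?thesis using rf_eq[OF x l(2)] reflR[OF x] by simp
    next
      case r thus ?thesis using G(2) by (simp add: f_def)
    qed
  qed
  have "ancestry m n G = R"
  proof (rule set_eqI)
    fix p :: "(nat + nat) \<times> (nat + nat)"
    obtain x y where p: "p = (x, y)" by (cases p)
    have "(x, y) \<in> R \<longleftrightarrow> x \<in> bnd m n \<and> y \<in> bnd m n \<and> rf x = rf y"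
    proof
      assume xy: "(x, y) \<in> R"
      hence b: "x \<in> bnd m n" "y \<in> bnd m n" using sub by auto
      have "(x, Inl (rf y)) \<in> R" using transR[OF xy conjunct2[OF rf[OF b(2)]]] .
      hence "rf x = rf y" using rf_eq[OF b(1)] rf[OF b(2)] by blast
      thus "x \<in> bnd m n \<and> y \<in> bnd m n \<and> rf x = rf y" using b by simp
    next
      assume h: "x \<in> bnd m n \<and> y \<in> bnd m n \<and> rf x = rf y"
      have "(x, Inl (rf x)) \<in> R" "(y, Inl (rf y)) \<in> R" using rf h by blast+
      thus "(x, y) \<in> R" using h symR transR by metis
    qed
    thus "p \<in> ancestry m n G \<longleftrightarrow> p \<in> R" using p by (auto simp: ancestry_char[OF G(1)] rbG)
  qed
  thus ?thesis using G(1) by blast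
qed

theorem theorem2p16:
  shows "(\<forall>m n G. wf_syn m n G \<longrightarrow> ancestry m n G \<in> fincorel_circ m n) \<and>
         (\<forall>m n R. R \<in> fincorel_circ m n \<longrightarrow> (\<exists>G. wf_syn m n G \<and> ancestry m n G = R)) \<and>
         (\<forall>m n G H. wf_syn m n G \<and> wf_syn m n H \<longrightarrow>
            (ancestry m n G = ancestry m n H \<longleftrightarrow> cocom_cong m n G H))"
proof (intro conjI allI impI)
  show "ancestry m n G \<in> fincorel_circ m n" if "wf_syn m n G" for m n G using part1[OF that] .
  show "\<exists>G. wf_syn m n G \<and> ancestry m n G = R" if "R \<in> fincorel_circ m n" for m n R
    using part2[OF that] .
  fix m n G H assume w: "wf_syn m n G \<and> wf_syn m n H"
  show "ancestry m n G = ancestry m n H \<longleftrightarrow> cocom_cong m n G H"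
  proof
    assume "ancestry m n G = ancestry m n H"
    hence e: "\<forall>j<n. aroot G j = aroot H j" using ancestry_eq_iff[of m n G H] w by simp
    have "n = m + fst G" using wf_card w by blast
    thus "cocom_cong m n G H" using completeness[of "fst G", rule_format, OF conjunct1[OF w] conjunct2[OF w]] e by blast
  next
    assume "cocom_cong m n G H"
    hence "\<forall>j<n. aroot G j = aroot H j" by (rule cc_sound)
    thus "ancestry m n G = ancestry m n H" using ancestry_eq_iff[of m n G H] w by simp
  qed
qed

end
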